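(* In the setting described in the context, assume the adjacency graph of the mesh (vertices $i$, edges the interior faces $i|j$) is connected and that at least one face of the mesh lies in $\Gamma_D$. Let $c^{l,n}\in\mathbb R^N$ satisfy $\min_ic^{l,n}_i>0$ for $l=1,\dots,M$, and let $T^n\in\mathbb R^N$ be arbitrary. Then for every $\Delta t>0$ there exists a unique $(c^{1,n+1},\dots,c^{M,n+1},\psi^{n+1})$ with $c^{l,n+1}_i>0$ for all $i,l$ satisfying equations (i) and (ii) of Scheme I. If moreover $T^n_i>0$ for all $i$ and $\Delta t<C_T/C_*$, where $C_*:=\max_i|P^{n+1}_i|$ (with $P^{n+1}$ computed from this $c^{l,n+1},\psi^{n+1}$), then equation (iii) of Scheme I has a unique solution $T^{n+1}$, and $T^{n+1}_i>0$ for $i=1,\dots,N$.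
   Context: Mesh. $\Omega\subset\mathbb R^d$ is a bounded polygonal/polyhedral domain with $\partial\Omega=\Gamma_D\cup\Gamma_N$, $\Gamma_D\cap\Gamma_N=\emptyset$. A Voronoi finite-volume mesh consists of points $\mathbf x_1,\dots,\mathbf x_N$ and control volumes $V_i=\{\mathbf y\in\Omega:|\mathbf y-\mathbf x_i|<|\mathbf y-\mathbf x_j|\ \forall j\ne i\}$. An interior face is $\sigma=\partial V_i\cap\partial V_j$ of positive $(d-1)$-measure, written $\sigma=i|j$; $\mathcal E_{int}$ is the set of interior faces and $\mathcal E_{i,int}$ those of $V_i$; $\mathcal E^D_{i,ext}$, $\mathcal E^N_{i,ext}$ are the faces of $\partial V_i$ lying in $\Gamma_D$, resp. $\Gamma_N$. $\mathrm m(\cdot)$ is Lebesgue measure (in dimension $d$ or $d-1$); $d_\sigma=|\mathbf x_i-\mathbf x_j|$ for $\sigma=i|j$ and $d_\sigma=\mathrm{dist}(\mathbf x_i,\sigma)$ for exterior faces of $V_i$; $\tau_\sigma=\mathrm m(\sigma)/d_\sigma$. Grid functions are vectors $u=(u_1,\dots,u_N)\in\mathbb R^N$; for $\sigma=i|j$, $Du_{i,\sigma}=u_j-u_i$. For positive $u$ and $\sigma=i|j$, $\mathcal A_\sigma u=\frac{(\mathrm m(V_i)+\mathrm m(V_j))u_iu_j}{\mathrm m(V_i)u_j+\mathrm m(V_j)u_i}$ (harmonic average). The discrete inner product is $(f,g)=\sum_{i=1}^N\mathrm m(V_i)f_ig_i$. Scheme I. Parameters: $\varepsilon>0$, $k>0$,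 $C_T>0$, $\Delta t>0$, $\nu^l>0$, $z^l\in\mathbb R$ ($l=1,\dots,M$), a grid function $\rho^f$, Dirichlet data $\psi^D_\sigma$ on $\Gamma_D$-faces and Neumann data $g_\sigma$ on $\Gamma_N$-faces. Given $c^{l,n}$ (positive), $T^n$, the unknowns $c^{l,n+1}$ (positive), $\psi^{n+1}$, $T^{n+1}$ satisfy, for $i=1,\dots,N$: (i) $\frac{c^{l,n+1}_i-c^{l,n}_i}{\Delta t}+\frac{\varepsilon}{\mathrm m(V_i)}\sum_{\sigma\in\mathcal E_{i,int}}\mathrm m(\sigma)F^l_{i,\sigma}=0$, where for $\sigma=i|j$ \[F^l_{i,\sigma}=-\frac{1}{\nu^l d_\sigma}\Big[\mathcal A_\sigma(c^{l,n})\,D\big(\log c^{l,n+1}+z^l\psi^{n+1}\big)_{i,\sigma}+D\big(c^{l,n}(T^n-1)\big)_{i,\sigma}\Big]\] (so $F^l_{j,\sigma}=-F^l_{i,\sigma}$), and the flux through exterior faces is zero (zero-flux boundary condition); (ii) $-\frac{\varepsilon^2}{\mathrm m(V_i)}\Big[\sum_{\sigma\in\mathcal E_{i,int}}\tau_\sigma D\psi^{n+1}_{i,\sigma}+\sum_{\sigma\in\mathcal E^D_{i,ext}}\tau_\sigma(\psi^D_\sigma-\psi^{n+1}_i)\Big]-\frac{1}{\mathrm m(V_i)}\sum_{\sigma\in\mathcal E^N_{i,ext}}\mathrm m(\sigma)g_\sigma=\sum_{l=1}^Mz^lc^{l,n+1}_i+\rho^f_i$; (iii) $C_T\frac{T^{n+1}_i-T^n_i}{\Delta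 t}=\frac{k}{\mathrm m(V_i)}\sum_{\sigma\in\mathcal E_{i,int}}\tau_\sigma DT^{n+1}_{i,\sigma}+T^{n+1}_iP^{n+1}_i+\varepsilon\sum_{l=1}^M\nu^lc^{l,n+1}_i|\hat{\mathbf u}^{l,n+1}_i|^2$ (thermally insulated boundary: no exterior-face terms), where \[P^{n+1}_i=\sum_{l=1}^M\Big[\frac{\varepsilon}{\mathrm m(V_i)}\sum_{\sigma\in\mathcal E_{i,int}}\mathrm m(\sigma)F^l_{i,\sigma}\lambda^l_\sigma+(1+\log c^{l,n+1}_i)\frac{c^{l,n+1}_i-c^{l,n}_i}{\Delta t}\Big],\] $\lambda^l_\sigma$ is a face value of $\log c^{l,n+1}$ depending only on $\sigma$ (the same from both sides), and $\hat{\mathbf u}^{l,n+1}_i\in\mathbb R^d$ are given cell-wise velocity reconstructions computed from $c^{l,n+1},\psi^{n+1},T^n$. *)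

theory Defs
  imports "HOL-Analysis.Analysis"
begin

text \<open>Abstract Voronoi finite-volume mesh data. Cells are the elements of a finite
type 'c; exterior (boundary) faces are the elements of a finite set of type 'e.\<close>

record ('c, 'e) fvmesh =
  vol   :: "'c \<Rightarrow> real"
  msig  :: "'c \<Rightarrow> 'c \<Rightarrow> real"    (* m(sigma) for sigma = i|j, 0 if no face *)
  dsig  :: "'c \<Rightarrow> 'c \<Rightarrow> real"    (* d_sigma = |x_i - x_j| *)
  EF    :: "'e set"
  own   :: "'e \<Rightarrow> 'c"           (* cell whose boundary contains the exterior face *)
  mext  :: "'e \<Rightarrow> real"
  dext  :: "'e \<Rightarrow> real"          (* dist(x_i, sigma), exterior face *)
  isD   :: "'e \<Rightarrow> bool"          (* face lies in Gamma_D (otherwise in Gamma_N) *)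

definition mesh_ok :: "('c::finite, 'e) fvmesh \<Rightarrow> bool" where
  "mesh_ok Mh \<longleftrightarrow>
     (\<forall>i. vol Mh i > 0) \<and>
     (\<forall>i j. msig Mh i j = msig Mh j i \<and> msig Mh i j \<ge> 0) \<and>
     (\<forall>i j. dsig Mh i j = dsig Mh j i) \<and>
     (\<forall>i j. i \<noteq> j \<and> msig Mh i j > 0 \<longrightarrow> dsig Mh i j > 0) \<and>
     finite (EF Mh) \<and>
     (\<forall>e \<in> EF Mh. mext Mh e > 0 \<and> dext Mh e > 0)"

text \<open>Interior faces of V_i, identified with the neighbouring cells j (sigma = i|j).\<close>
definition nbrs :: "('c, 'e) fvmesh \<Rightarrow> 'c \<Rightarrow> 'c set" where
  "nbrs Mh i = {j. j \<noteq> i \<and> msig Mh i j > 0}"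

definition adj_rel :: "('c, 'e) fvmesh \<Rightarrow> ('c \<times> 'c) set" where
  "adj_rel Mh = {(i, j). j \<in> nbrs Mh i}"

definition mesh_connected :: "('c, 'e) fvmesh \<Rightarrow> bool" where
  "mesh_connected Mh \<longleftrightarrow> (\<forall>i j. (i, j) \<in> (adj_rel Mh)\<^sup>*)"

definition has_dirichlet_face :: "('c, 'e) fvmesh \<Rightarrow> bool" where
  "has_dirichlet_face Mh \<longleftrightarrow> (\<exists>e \<in> EF Mh. isD Mh e)"

definition tau :: "('c, 'e) fvmesh \<Rightarrow> 'c \<Rightarrow> 'c \<Rightarrow> real" where
  "tau Mh i j = msig Mh i j / dsig Mh i j"

definition harm :: "('c, 'e) fvmesh \<Rightarrow> ('c \<Rightarrow> real) \<Rightarrow> 'c \<Rightarrow> 'c \<Rightarrow> real" where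
  "harm Mh u i j = (vol Mh i + vol Mh j) * u i * u j / (vol Mh i * u j + vol Mh j * u i)"

text \<open>Flux F^l_{i,sigma}, sigma = i|j. Arguments: mesh, nu, z, c^n, T^n, c^{n+1}, psi^{n+1}, l, i, j.\<close>
definition flux ::
  "('c, 'e) fvmesh \<Rightarrow> ('s \<Rightarrow> real) \<Rightarrow> ('s \<Rightarrow> real) \<Rightarrow> ('s \<Rightarrow> 'c \<Rightarrow> real) \<Rightarrow> ('c \<Rightarrow> real)
   \<Rightarrow> ('s \<Rightarrow> 'c \<Rightarrow> real) \<Rightarrow> ('c \<Rightarrow> real) \<Rightarrow> 's \<Rightarrow> 'c \<Rightarrow> 'c \<Rightarrow> real" where
  "flux Mh nu z cn Tn c psi l i j =
     - (1 / (nu l * dsig Mh i j)) *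
       (harm Mh (cn l) i j * ((ln (c l j) + z l * psi j) - (ln (c l i) + z l * psi i))
        + (cn l j * (Tn j - 1) - cn l i * (Tn i - 1)))"

definition scheme_eq1 ::
  "('c::finite, 'e) fvmesh \<Rightarrow> real \<Rightarrow> real \<Rightarrow> ('s \<Rightarrow> real) \<Rightarrow> ('s \<Rightarrow> real)
   \<Rightarrow> ('s \<Rightarrow> 'c \<Rightarrow> real) \<Rightarrow> ('c \<Rightarrow> real) \<Rightarrow> ('s \<Rightarrow> 'c \<Rightarrow> real) \<Rightarrow> ('c \<Rightarrow> real) \<Rightarrow> bool" where
  "scheme_eq1 Mh eps dt nu z cn Tn c psi \<longleftrightarrow>
     (\<forall>l i. (c l i - cn l i) / dt
             + eps / vol Mh i * (\<Sum>j\<in>nbrs Mh i. msig Mh i j * flux Mh nu z cn Tn c psi l i j) = 0)"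

definition scheme_eq2 ::
  "('c::finite, 'e) fvmesh \<Rightarrow> real \<Rightarrow> ('s::finite \<Rightarrow> real) \<Rightarrow> ('c \<Rightarrow> real) \<Rightarrow> ('e \<Rightarrow> real) \<Rightarrow> ('e \<Rightarrow> real)
   \<Rightarrow> ('s \<Rightarrow> 'c \<Rightarrow> real) \<Rightarrow> ('c \<Rightarrow> real) \<Rightarrow> bool" where
  "scheme_eq2 Mh eps z rhof psiD g c psi \<longleftrightarrow>
     (\<forall>i. - (eps\<^sup>2 / vol Mh i) *
            ((\<Sum>j\<in>nbrs Mh i. tau Mh i j * (psi j - psi i))
             + (\<Sum>e\<in>{e\<in>EF Mh. own Mh e = i \<and> isD Mh e}. mext Mh e / dext Mh e * (psiD e - psi i)))
          - 1 / vol Mh i * (\<Sum>e\<in>{e\<in>EF Mh. own Mh e = i \<and> \<not> isD Mh e}. mext Mh e * g e)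
        = (\<Sum>l\<in>UNIV. z l * c l i) + rhof i)"

text \<open>P^{n+1}_i. lamf u i j is the face value lambda_sigma of log u (symmetric in i, j).\<close>
definition Pterm ::
  "('c::finite, 'e) fvmesh \<Rightarrow> real \<Rightarrow> real \<Rightarrow> ('s::finite \<Rightarrow> real) \<Rightarrow> ('s \<Rightarrow> real)
   \<Rightarrow> (('c \<Rightarrow> real) \<Rightarrow> 'c \<Rightarrow> 'c \<Rightarrow> real)
   \<Rightarrow> ('s \<Rightarrow> 'c \<Rightarrow> real) \<Rightarrow> ('c \<Rightarrow> real) \<Rightarrow> ('s \<Rightarrow> 'c \<Rightarrow> real) \<Rightarrow> ('c \<Rightarrow> real) \<Rightarrow> 'c \<Rightarrow> real" where
  "Pterm Mh eps dt nu z lamf cn Tn c psi i =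
     (\<Sum>l\<in>UNIV. eps / vol Mh i *
                 (\<Sum>j\<in>nbrs Mh i. msig Mh i j * flux Mh nu z cn Tn c psi l i j * lamf (c l) i j)
               + (1 + ln (c l i)) * (c l i - cn l i) / dt)"

definition Cstar ::
  "('c::finite, 'e) fvmesh \<Rightarrow> real \<Rightarrow> real \<Rightarrow> ('s::finite \<Rightarrow> real) \<Rightarrow> ('s \<Rightarrow> real)
   \<Rightarrow> (('c \<Rightarrow> real) \<Rightarrow> 'c \<Rightarrow> 'c \<Rightarrow> real)
   \<Rightarrow> ('s \<Rightarrow> 'c \<Rightarrow> real) \<Rightarrow> ('c \<Rightarrow> real) \<Rightarrow> ('s \<Rightarrow> 'c \<Rightarrow> real) \<Rightarrow> ('c \<Rightarrow> real) \<Rightarrow> real" where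
  "Cstar Mh eps dt nu z lamf cn Tn c psi =
     Max (range (\<lambda>i. \<bar>Pterm Mh eps dt nu z lamf cn Tn c psi i\<bar>))"

text \<open>Equation (iii) of Scheme I (all cells), unknown T = T^{n+1}.
  uhat c psi Tn l i is the given velocity reconstruction (computed from c^{n+1}, psi^{n+1}, T^n).\<close>
definition scheme_eq3 ::
  "('c::finite, 'e) fvmesh \<Rightarrow> real \<Rightarrow> real \<Rightarrow> real \<Rightarrow> real \<Rightarrow> ('s::finite \<Rightarrow> real) \<Rightarrow> ('s \<Rightarrow> real)
   \<Rightarrow> (('c \<Rightarrow> real) \<Rightarrow> 'c \<Rightarrow> 'c \<Rightarrow> real)
   \<Rightarrow> (('s \<Rightarrow> 'c \<Rightarrow> real) \<Rightarrow> ('c \<Rightarrow> real) \<Rightarrow> ('c \<Rightarrow> real) \<Rightarrow> 's \<Rightarrow> 'c \<Rightarrow> real ^ 'd)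
   \<Rightarrow> ('s \<Rightarrow> 'c \<Rightarrow> real) \<Rightarrow> ('c \<Rightarrow> real) \<Rightarrow> ('s \<Rightarrow> 'c \<Rightarrow> real) \<Rightarrow> ('c \<Rightarrow> real) \<Rightarrow> ('c \<Rightarrow> real) \<Rightarrow> bool" where
  "scheme_eq3 Mh eps k CT dt nu z lamf uhat cn Tn c psi T \<longleftrightarrow>
     (\<forall>i. CT * (T i - Tn i) / dt
          = k / vol Mh i * (\<Sum>j\<in>nbrs Mh i. tau Mh i j * (T j - T i))
            + T i * Pterm Mh eps dt nu z lamf cn Tn c psi i
            + eps * (\<Sum>l\<in>UNIV. nu l * c l i * (norm (uhat c psi Tn l i))\<^sup>2))"

end

theory Submission
  imports Defs
begin

lemma minprin:
  fixes T b \<gamma> \<kappa> :: "'c::finite \<Rightarrow> real" and tt :: "'c \<Rightarrow> 'c \<Rightarrow> real"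
  assumes g: "\<forall>i. \<gamma> i > 0" and k: "\<forall>i. \<kappa> i \<ge> 0" and t: "\<forall>i j. tt i j \<ge> 0"
    and eq: "\<forall>i. \<gamma> i * T i - \<kappa> i * (\<Sum>j\<in>UNIV. tt i j * (T j - T i)) = b i"
    and b: "\<forall>i. b i \<ge> 0"
  shows "\<forall>i. T i \<ge> 0" and "(\<forall>i. b i > 0) \<Longrightarrow> (\<forall>i. T i > 0)"
proof -
  obtain i0 where i0: "\<forall>j. T i0 \<le> T j"
  proof -
    have "finite (range T)" "range T \<noteq> {}" by auto
    then have "Min (range T) \<in> range T" by (rule Min_in)
    then obtain i0 where "T i0 = Min (range T)" by (metis rangeE)
    then show ?thesis using that[of i0] by auto
  qed
  have s: "(\<Sum>j\<in>UNIV. tt i0 j * (T j - T i0)) \<ge> 0"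
    by (rule sum_nonneg) (use t i0 in auto)
  have "\<kappa> i0 * (\<Sum>j\<in>UNIV. tt i0 j * (T j - T i0)) \<ge> 0" using k s by auto
  then have e: "\<gamma> i0 * T i0 \<ge> b i0" using eq[rule_format, of i0] by linarith
  have "T i0 \<ge> 0"
  proof (rule ccontr)
    assume "\<not> T i0 \<ge> 0"
    then have "\<gamma> i0 * T i0 < 0" using g by (simp add: mult_pos_neg)
    then show False using e b by (meson le_less_trans linorder_not_le)
  qed
  then show "\<forall>i. T i \<ge> 0" using i0 by (meson order_trans)
  assume bp: "\<forall>i. b i > 0"
  have "T i0 > 0"
  proof (rule ccontr)
    assume "\<not> T i0 > 0"
    then have "\<gamma> i0 * T i0 \<le> 0" using g[rule_format, of i0] by (meson mult_nonneg_nonpos less_imp_le not_less)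
    then show False using e bp by (meson le_less_trans linorder_not_le)
  qed
  then show "\<forall>i. T i > 0" using i0 by (meson less_le_trans)
qed

lemma linsolve:
  fixes b \<gamma> \<kappa> :: "'c::finite \<Rightarrow> real" and tt :: "'c \<Rightarrow> 'c \<Rightarrow> real"
  assumes g: "\<forall>i. \<gamma> i > 0" and k: "\<forall>i. \<kappa> i \<ge> 0" and t: "\<forall>i j. tt i j \<ge> 0"
  shows "\<exists>!T. \<forall>i. \<gamma> i * T i - \<kappa> i * (\<Sum>j\<in>UNIV. tt i j * (T j - T i)) = b i"
proof -
  define L where "L T i = \<gamma> i * T i - \<kappa> i * (\<Sum>j\<in>UNIV. tt i j * (T j - T i))" for T :: "'c \<Rightarrow> real" and i
  have Ldiff: "L T i - L T' i = L (\<lambda>j. T j - T' j) i" for T T' i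
  proof -
    have "(\<Sum>j\<in>UNIV. tt i j * (T j - T i)) - (\<Sum>j\<in>UNIV. tt i j * (T' j - T' i))
        = (\<Sum>j\<in>UNIV. tt i j * ((T j - T' j) - (T i - T' i)))"
      by (simp add: sum_subtractf[symmetric] algebra_simps)
    then show ?thesis unfolding L_def by (simp add: algebra_simps)
  qed
  have hom: "(\<forall>i. L D i = 0) \<Longrightarrow> D = (\<lambda>_. 0)" for D
  proof -
    assume h: "\<forall>i. L D i = 0"
    have "\<forall>i. D i \<ge> 0" by (rule minprin(1)[OF g k t, of D "\<lambda>_. 0"]) (use h in \<open>auto simp: L_def\<close>)
    moreover have "\<forall>i. - D i \<ge> 0"
    proof (rule minprin(1)[OF g k t, of "\<lambda>i. - D i" "\<lambda>_. 0"])
      show "\<forall>i. \<gamma> i * - D i - \<kappa> i * (\<Sum>j\<in>UNIV. tt i j * (- D j - - D i)) = 0"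
      proof
        fix i
        have "\<gamma> i * - D i - \<kappa> i * (\<Sum>j\<in>UNIV. tt i j * (- D j - - D i)) = - L D i"
        proof -
          have "(\<Sum>j\<in>UNIV. tt i j * (- D j - - D i)) = - (\<Sum>j\<in>UNIV. tt i j * (D j - D i))"
            by (simp add: sum_negf[symmetric] algebra_simps)
          then show ?thesis unfolding L_def by (simp add: algebra_simps)
        qed
        then show "\<gamma> i * - D i - \<kappa> i * (\<Sum>j\<in>UNIV. tt i j * (- D j - - D i)) = 0" using h by simp
      qed
    qed simp
    ultimately show ?thesis by (intro ext) (meson antisym neg_0_le_iff_le)
  qed
  define Lop :: "real^'c \<Rightarrow> real^'c" where "Lop x = (\<chi> i. L (\<lambda>j. x$j) i)" for x
  have lin: "linear Lop"
  proof (rule linearI)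
    fix x y :: "real^'c" and c :: real
    have "(\<Sum>j\<in>UNIV. tt i j * ((x+y)$j - (x+y)$i)) = (\<Sum>j\<in>UNIV. tt i j * (x$j - x$i)) + (\<Sum>j\<in>UNIV. tt i j * (y$j - y$i))" for i
      by (simp add: sum.distrib[symmetric] algebra_simps)
    then show "Lop (x + y) = Lop x + Lop y"
      unfolding Lop_def L_def by (simp add: vec_eq_iff algebra_simps)
    show "Lop (c *\<^sub>R x) = c *\<^sub>R Lop x"
      unfolding Lop_def L_def by (simp add: vec_eq_iff algebra_simps sum_distrib_left)
  qed
  have inj: "inj Lop"
  proof (rule injI)
    fix x y assume "Lop x = Lop y"
    then have "\<forall>i. L (\<lambda>j. x$j) i - L (\<lambda>j. y$j) i = 0" by (simp add: Lop_def vec_eq_iff)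
    then have "\<forall>i. L (\<lambda>j. x$j - y$j) i = 0" using Ldiff by simp
    then have "(\<lambda>j. x$j - y$j) = (\<lambda>_. 0)" by (rule hom)
    then show "x = y" by (simp add: vec_eq_iff fun_eq_iff)
  qed
  have "surj Lop" using lin inj by (simp add: linear_injective_imp_surjective)
  then obtain x where "Lop x = (\<chi> i. b i)" by (metis surjD)
  then have ex: "\<forall>i. L (\<lambda>j. x$j) i = b i" by (simp add: Lop_def vec_eq_iff)
  show ?thesis
  proof (rule ex1I[of _ "\<lambda>j. x$j"])
    show "\<forall>i. \<gamma> i * x $ i - \<kappa> i * (\<Sum>j\<in>UNIV. tt i j * (x $ j - x $ i)) = b i" using ex by (simp add: L_def)
  next
    fix T assume "\<forall>i. \<gamma> i * T i - \<kappa> i * (\<Sum>j\<in>UNIV. tt i j * (T j - T i)) = b i"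
    then have "\<forall>i. L T i - L (\<lambda>j. x$j) i = 0" using ex by (simp add: L_def)
    then have "(\<lambda>j. T j - x$j) = (\<lambda>_. 0)" using Ldiff hom by simp
    then show "T = (\<lambda>j. x$j)" by (simp add: fun_eq_iff)
  qed
qed

definition Qw :: "('c::finite \<Rightarrow> 'c \<Rightarrow> real) \<Rightarrow> ('c \<Rightarrow> real) \<Rightarrow> real" where
  "Qw w u = (\<Sum>i\<in>UNIV. \<Sum>j\<in>UNIV. w i j * (u i - u j)\<^sup>2)"

lemma Qw_nonneg: "\<forall>i j. w i j \<ge> 0 \<Longrightarrow> Qw w u \<ge> 0"
  unfolding Qw_def by (intro sum_nonneg) auto

lemma Qw_term: assumes "\<forall>i j. w i j \<ge> 0" shows "w i j * (u i - u j)\<^sup>2 \<le> Qw w u"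
proof -
  have "w i j * (u i - u j)\<^sup>2 \<le> (\<Sum>j\<in>UNIV. w i j * (u i - u j)\<^sup>2)"
    by (rule member_le_sum) (use assms in auto)
  also have "\<dots> \<le> Qw w u" unfolding Qw_def
    by (rule member_le_sum[of i]) (use assms in \<open>auto intro: sum_nonneg\<close>)
  finally show ?thesis .
qed

lemma poincare:
  fixes w :: "'c::finite \<Rightarrow> 'c \<Rightarrow> real" and R :: "('c \<times> 'c) set"
  assumes wn: "\<forall>i j. w i j \<ge> 0" and wp: "\<forall>i j. (i,j) \<in> R \<longrightarrow> w i j > 0"
    and conn: "\<forall>i j. (i,j) \<in> R\<^sup>*"
  shows "\<exists>K\<ge>0. \<forall>u i j. \<bar>u i - u j\<bar> \<le> K * sqrt (Qw w u)"
proof -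
  define Ke where "Ke = (\<Sum>i\<in>UNIV. \<Sum>j\<in>UNIV. if (i,j) \<in> R then 1 / sqrt (w i j) else 0)"
  have Kt: "(if (i,j) \<in> R then 1 / sqrt (w i j) else 0) \<ge> 0" for i j using wn by auto
  have Ke0: "Ke \<ge> 0" unfolding Ke_def by (intro sum_nonneg) (use Kt in auto)
  have Kle: "(i,j) \<in> R \<Longrightarrow> 1 / sqrt (w i j) \<le> Ke" for i j
  proof -
    assume r: "(i,j) \<in> R"
    have "(if (i,j) \<in> R then 1 / sqrt (w i j) else 0) \<le> (\<Sum>j\<in>UNIV. if (i,j) \<in> R then 1 / sqrt (w i j) else 0)"
      by (rule member_le_sum) (use Kt in auto)
    also have "\<dots> \<le> Ke" unfolding Ke_def
      by (rule member_le_sum[of i]) (use Kt in \<open>auto intro: sum_nonneg\<close>)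
    finally show ?thesis using r by simp
  qed
  have edge: "\<bar>u i - u j\<bar> \<le> Ke * sqrt (Qw w u)" if r: "(i,j) \<in> R" for u i j
  proof -
    have wpos: "w i j > 0" using wp r by auto
    have "w i j * (u i - u j)\<^sup>2 \<le> Qw w u" by (rule Qw_term[OF wn])
    then have "(u i - u j)\<^sup>2 \<le> Qw w u / w i j" using wpos by (simp add: field_simps)
    then have "sqrt ((u i - u j)\<^sup>2) \<le> sqrt (Qw w u / w i j)" by (rule real_sqrt_le_mono)
    then have "\<bar>u i - u j\<bar> \<le> sqrt (Qw w u) * (1 / sqrt (w i j))" by (simp add: real_sqrt_divide)
    also have "\<dots> \<le> sqrt (Qw w u) * Ke" by (rule mult_left_mono[OF Kle[OF r]]) (simp add: Qw_nonneg[OF wn])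
    finally show ?thesis by (simp add: mult.commute)
  qed
  have path: "(i,j) \<in> R ^^ n \<Longrightarrow> \<bar>u i - u j\<bar> \<le> real n * Ke * sqrt (Qw w u)" for u i j n
  proof (induction n arbitrary: j)
    case 0 then show ?case by simp
  next
    case (Suc n)
    then obtain m where m1: "(i,m) \<in> R ^^ n" and m2: "(m,j) \<in> R" by auto
    have "\<bar>u i - u j\<bar> \<le> \<bar>u i - u m\<bar> + \<bar>u m - u j\<bar>" by simp
    also have "\<dots> \<le> real n * Ke * sqrt (Qw w u) + Ke * sqrt (Qw w u)"
      using Suc.IH[OF m1] edge[OF m2, of u] by linarith
    finally show ?case by (simp add: algebra_simps)
  qed
  define nn where "nn i j = (SOME n. (i,j) \<in> R ^^ n)" for i j
  have nn: "(i,j) \<in> R ^^ nn i j" for i j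
    unfolding nn_def using rtrancl_imp_relpow[OF conn[rule_format, of i j]] by (rule someI_ex)
  define K where "K = real (\<Sum>i\<in>UNIV. \<Sum>j\<in>UNIV. nn i j) * Ke"
  have nnle: "nn i j \<le> (\<Sum>i\<in>UNIV. \<Sum>j\<in>UNIV. nn i j)" for i j
  proof -
    have "nn i j \<le> (\<Sum>j\<in>UNIV. nn i j)" by (rule member_le_sum) auto
    also have "\<dots> \<le> (\<Sum>i\<in>UNIV. \<Sum>j\<in>UNIV. nn i j)" by (rule member_le_sum[of i]) auto
    finally show ?thesis .
  qed
  show ?thesis
  proof (intro exI[of _ K] conjI allI)
    show "K \<ge> 0" unfolding K_def using Ke0 by (simp del: of_nat_sum)
    fix u i j
    have "\<bar>u i - u j\<bar> \<le> real (nn i j) * Ke * sqrt (Qw w u)" by (rule path[OF nn])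
    also have "\<dots> \<le> K * sqrt (Qw w u)" unfolding K_def
    proof (intro mult_right_mono)
      show "real (nn i j) \<le> real (\<Sum>i\<in>UNIV. \<Sum>j\<in>UNIV. nn i j)" using nnle[of i j] by (simp only: of_nat_le_iff)
    qed (use Ke0 Qw_nonneg[OF wn] in auto)
    finally show "\<bar>u i - u j\<bar> \<le> K * sqrt (Qw w u)" .
  qed
qed

lemma exp_quad_lb: "y \<ge> 0 \<Longrightarrow> y\<^sup>2 / 4 \<le> exp (y::real)"
proof -
  assume y: "y \<ge> 0"
  have e: "exp y = (exp (y/2))\<^sup>2" by (simp add: power2_eq_square exp_add[symmetric])
  have "y/2 \<le> exp (y/2)" using exp_ge_add_one_self[of "y/2"] by linarith
  then have "(y/2)\<^sup>2 \<le> (exp (y/2))\<^sup>2" using y by (intro power_mono) auto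
  then show ?thesis using e by (simp add: power_divide)
qed

lemma h_lb:
  fixes v R y :: real assumes v: "v > 0" and R: "R > 0"
  shows "v * exp y - R * y \<ge> min R 1 * \<bar>y\<bar> - (R+1)\<^sup>2 / v"
proof (cases "y \<ge> 0")
  case True
  have "v * (y\<^sup>2/4) \<le> v * exp y" using exp_quad_lb[OF True] v by simp
  moreover have "v * (y\<^sup>2/4) - (R+1) * y \<ge> - (R+1)\<^sup>2 / v"
  proof -
    have "v * (v * (y\<^sup>2/4) - (R+1) * y) + (R+1)\<^sup>2 = (v * y / 2 - (R + 1))\<^sup>2"
      by (simp add: power2_eq_square algebra_simps)
    then have h: "v * (v * (y\<^sup>2/4) - (R+1) * y) \<ge> - (R+1)\<^sup>2" using zero_le_power2[of "v * y / 2 - (R + 1)"] by linarith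
    have "v * (y\<^sup>2/4) - (R+1) * y = (v * (v * (y\<^sup>2/4) - (R+1) * y)) / v" using v by simp
    also have "\<dots> \<ge> (- (R+1)\<^sup>2) / v" by (rule divide_right_mono[OF h]) (use v in simp)
    finally show ?thesis by simp
  qed
  moreover have "min R 1 * \<bar>y\<bar> \<le> y" using True mult_right_mono[of "min R 1" 1 y] by simp
  moreover have "(R+1)*y = R*y + y" by (simp add: algebra_simps)
  ultimately show ?thesis by linarith
next
  case False
  have "v * exp y > 0" using v by simp
  moreover have "min R 1 * \<bar>y\<bar> \<le> - R * y" using False R
    by (simp add: min_def mult_right_mono)
  moreover have "(R+1)\<^sup>2 / v \<ge> 0" using v by simp
  ultimately show ?thesis by linarith
qed

lemma quad_absorb: fixes a C q :: real assumes "a > 0"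
  shows "a/4 * q\<^sup>2 - C * q \<ge> a/8 * q\<^sup>2 - 2 * C\<^sup>2 / a"
proof -
  have aa: "a * (2 * C\<^sup>2 / a) = 2 * C\<^sup>2" using assms by simp
  have "a * (a/8 * q\<^sup>2 - C * q + 2 * C\<^sup>2 / a) = a * (a/8 * q\<^sup>2 - C * q) + a * (2 * C\<^sup>2 / a)"
    by (simp add: distrib_left)
  also have "\<dots> = 2 * (a*q/4 - C)\<^sup>2" unfolding aa by (simp add: power2_eq_square algebra_simps)
  finally have "a * (a/8 * q\<^sup>2 - C * q + 2 * C\<^sup>2 / a) = 2 * (a*q/4 - C)\<^sup>2" .
  then have "a * (a/8 * q\<^sup>2 - C * q + 2 * C\<^sup>2 / a) \<ge> 0" by simp
  then have "a/8 * q\<^sup>2 - C * q + 2 * C\<^sup>2 / a \<ge> 0" using assms by (simp add: zero_le_mult_iff)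
  then show ?thesis by linarith
qed

lemma species_lb:
  fixes v r :: "'c::finite \<Rightarrow> real" and w :: "'c \<Rightarrow> 'c \<Rightarrow> real" and zl a K :: real and k :: 'c
  assumes v: "\<forall>i. v i > 0" and a: "a > 0" and R: "(\<Sum>i\<in>UNIV. r i) > 0" and K: "K \<ge> 0"
    and wn: "\<forall>i j. w i j \<ge> 0"
    and poinc: "\<forall>u i j. \<bar>u i - u j\<bar> \<le> K * sqrt (Qw w u)"
  shows "\<exists>m>0. \<exists>K0 c. \<forall>u psi \<rho>. (\<forall>i. \<bar>psi i\<bar> \<le> \<rho>) \<longrightarrow>
     (\<Sum>i\<in>UNIV. v i * exp (u i - zl * psi i)) + a/4 * Qw w u - (\<Sum>i\<in>UNIV. r i * u i)
       \<ge> m * \<bar>u k - zl * psi k\<bar> + a/8 * Qw w u - K0 - c * \<rho>"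
proof -
  define Rs where "Rs = (\<Sum>i\<in>UNIV. r i)"
  define Ra where "Ra = (\<Sum>i\<in>UNIV. \<bar>r i\<bar>)"
  have Ra0: "Ra \<ge> 0" unfolding Ra_def by (simp add: sum_nonneg)
  define m where "m = min Rs 1"
  define K0 where "K0 = (Rs+1)\<^sup>2 / v k + 2 * (Ra*K)\<^sup>2 / a"
  define c where "c = 3 * \<bar>zl\<bar> * Ra"
  show ?thesis
  proof (rule exI[of _ m], rule conjI[rotated], rule exI[of _ K0], rule exI[of _ c], intro allI impI)
    show "m > 0" unfolding m_def using R Rs_def by simp
  next
    fix u psi :: "'c \<Rightarrow> real" and \<rho> :: real assume rho: "\<forall>i. \<bar>psi i\<bar> \<le> \<rho>"
    define s where "s i = u i - zl * psi i" for i
    define Q where "Q = Qw w u"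
    have Q0: "Q \<ge> 0" unfolding Q_def by (rule Qw_nonneg[OF wn])
    have split: "(\<Sum>i\<in>UNIV. r i * u i) = (\<Sum>i\<in>UNIV. r i * s i) + zl * (\<Sum>i\<in>UNIV. r i * psi i)"
    proof -
      have "(\<Sum>i\<in>UNIV. r i * s i) = (\<Sum>i\<in>UNIV. r i * u i - zl * (r i * psi i))"
        unfolding s_def by (simp add: algebra_simps)
      also have "\<dots> = (\<Sum>i\<in>UNIV. r i * u i) - zl * (\<Sum>i\<in>UNIV. r i * psi i)"
        by (simp add: sum_subtractf sum_distrib_left)
      finally show ?thesis by simp
    qed
    have b1: "zl * (\<Sum>i\<in>UNIV. r i * psi i) \<le> \<bar>zl\<bar> * Ra * \<rho>"
    proof -
      have "\<bar>\<Sum>i\<in>UNIV. r i * psi i\<bar> \<le> (\<Sum>i\<in>UNIV. \<bar>r i\<bar> * \<rho>)"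
        by (rule order_trans[OF sum_abs]) (intro sum_mono, use rho in \<open>auto simp: abs_mult intro: mult_left_mono\<close>)
      also have "\<dots> = Ra * \<rho>" unfolding Ra_def by (simp add: sum_distrib_right)
      finally have "\<bar>zl * (\<Sum>i\<in>UNIV. r i * psi i)\<bar> \<le> \<bar>zl\<bar> * (Ra * \<rho>)"
        by (simp add: abs_mult mult_left_mono)
      then show ?thesis by (simp add: mult.assoc)
    qed
    have dif: "\<bar>s i - s k\<bar> \<le> K * sqrt Q + \<bar>zl\<bar> * (2*\<rho>)" for i
    proof -
      have e: "s i - s k = (u i - u k) - zl * (psi i - psi k)" unfolding s_def by (simp add: algebra_simps)
      have "\<bar>(u i - u k) - zl * (psi i - psi k)\<bar> \<le> \<bar>u i - u k\<bar> + \<bar>zl * (psi i - psi k)\<bar>"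
        by (rule abs_triangle_ineq4)
      then have "\<bar>s i - s k\<bar> \<le> \<bar>u i - u k\<bar> + \<bar>zl\<bar> * \<bar>psi i - psi k\<bar>" unfolding e abs_mult .
      moreover have "\<bar>u i - u k\<bar> \<le> K * sqrt Q" using poinc Q_def by blast
      moreover have "\<bar>psi i - psi k\<bar> \<le> 2*\<rho>" using rho[rule_format, of i] rho[rule_format, of k] by linarith
      then have "\<bar>zl\<bar> * \<bar>psi i - psi k\<bar> \<le> \<bar>zl\<bar> * (2*\<rho>)" by (simp add: mult_left_mono)
      ultimately show ?thesis by linarith
    qed
    have b2: "(\<Sum>i\<in>UNIV. r i * s i) \<le> Rs * s k + Ra * (K * sqrt Q + \<bar>zl\<bar> * (2*\<rho>))"
    proof -
      have "(\<Sum>i\<in>UNIV. r i * (s i - s k)) = (\<Sum>i\<in>UNIV. r i * s i) - (\<Sum>i\<in>UNIV. r i * s k)"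
        by (simp add: right_diff_distrib sum_subtractf)
      moreover have "(\<Sum>i\<in>UNIV. r i * s k) = Rs * s k" unfolding Rs_def by (simp add: sum_distrib_right)
      ultimately have "(\<Sum>i\<in>UNIV. r i * s i) = Rs * s k + (\<Sum>i\<in>UNIV. r i * (s i - s k))" by linarith
      moreover have "(\<Sum>i\<in>UNIV. r i * (s i - s k)) \<le> (\<Sum>i\<in>UNIV. \<bar>r i\<bar> * (K * sqrt Q + \<bar>zl\<bar> * (2*\<rho>)))"
      proof (rule sum_mono)
        fix i
        have "r i * (s i - s k) \<le> \<bar>r i\<bar> * \<bar>s i - s k\<bar>" by (metis abs_ge_self abs_mult)
        also have "\<dots> \<le> \<bar>r i\<bar> * (K * sqrt Q + \<bar>zl\<bar> * (2*\<rho>))" by (rule mult_left_mono[OF dif]) simp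
        finally show "r i * (s i - s k) \<le> \<bar>r i\<bar> * (K * sqrt Q + \<bar>zl\<bar> * (2*\<rho>))" .
      qed
      moreover have "(\<Sum>i\<in>UNIV. \<bar>r i\<bar> * (K * sqrt Q + \<bar>zl\<bar> * (2*\<rho>))) = Ra * (K * sqrt Q + \<bar>zl\<bar> * (2*\<rho>))"
        unfolding Ra_def by (simp add: sum_distrib_right)
      ultimately show ?thesis by linarith
    qed
    have b3: "v k * exp (s k) \<le> (\<Sum>i\<in>UNIV. v i * exp (u i - zl * psi i))"
      unfolding s_def by (rule member_le_sum[of k, where f="\<lambda>i. v i * exp (u i - zl * psi i)"]) (use v in \<open>auto intro: less_imp_le\<close>)
    have b4: "v k * exp (s k) - Rs * s k \<ge> m * \<bar>s k\<bar> - (Rs+1)\<^sup>2 / v k"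
      unfolding m_def by (rule h_lb) (use v R Rs_def in auto)
    have b5: "a/4 * (sqrt Q)\<^sup>2 - (Ra*K) * sqrt Q \<ge> a/8 * (sqrt Q)\<^sup>2 - 2 * (Ra*K)\<^sup>2 / a"
      by (rule quad_absorb[OF a])
    have sq: "(sqrt Q)\<^sup>2 = Q" using Q0 by simp
    have x1: "Ra * (K * sqrt Q + \<bar>zl\<bar> * (2*\<rho>)) = Ra * K * sqrt Q + 2 * (\<bar>zl\<bar> * Ra * \<rho>)"
      by (simp add: algebra_simps)
    have x2: "c * \<rho> = 3 * (\<bar>zl\<bar> * Ra * \<rho>)" unfolding c_def by simp
    have x3: "a/4 * (sqrt Q)\<^sup>2 - (Ra*K) * sqrt Q = a/4 * Q - Ra * K * sqrt Q" using sq by simp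
    have x4: "a/8 * (sqrt Q)\<^sup>2 = a/8 * Q" using sq by simp
    have x5: "K0 = (Rs+1)\<^sup>2 / v k + 2 * (Ra*K)\<^sup>2 / a" by (rule K0_def)
    show "(\<Sum>i\<in>UNIV. v i * exp (u i - zl * psi i)) + a/4 * Qw w u - (\<Sum>i\<in>UNIV. r i * u i)
       \<ge> m * \<bar>u k - zl * psi k\<bar> + a/8 * Qw w u - K0 - c * \<rho>"
      using b1 b2 b3 b4 b5 split x1 x2 x3 x4 x5 unfolding Q_def[symmetric] s_def[symmetric]
      by linarith
  qed
qed

lemma sum_delta1: "(\<Sum>i\<in>(UNIV::'c::finite set). (if i = k then 1 else 0) * (Z i :: real)) = Z k"
proof -
  have "(\<Sum>i\<in>(UNIV::'c set). (if i = k then 1 else 0) * Z i) = (\<Sum>i\<in>UNIV. if i = k then Z i else 0)"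
    by (rule sum.cong) auto
  then show ?thesis by simp
qed

lemma dsum_delta1: "(\<Sum>i\<in>(UNIV::'c::finite set). \<Sum>j\<in>(UNIV::'d::finite set). (if i = k then 1 else 0) * (Y i j :: real)) = (\<Sum>j\<in>UNIV. Y k j)"
proof -
  have "(\<Sum>i\<in>(UNIV::'c set). \<Sum>j\<in>UNIV. (if i = k then 1 else 0) * Y i j) = (\<Sum>i\<in>(UNIV::'c set). (if i = k then 1 else 0) * (\<Sum>j\<in>UNIV. Y i j))"
    by (simp add: sum_distrib_left)
  also have "\<dots> = (\<Sum>j\<in>UNIV. Y k j)" by (rule sum_delta1)
  finally show ?thesis .
qed

lemma dsum_delta2: "(\<Sum>i\<in>(UNIV::'c::finite set). \<Sum>j\<in>(UNIV::'c set). (if j = k then 1 else 0) * (Y i j :: real)) = (\<Sum>i\<in>UNIV. Y i k)"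
  by (simp only: sum_delta1)

lemma quad_delta:
  fixes w :: "'c::finite \<Rightarrow> 'c \<Rightarrow> real" and u :: "'c \<Rightarrow> real"
  assumes sym: "\<forall>i j. w i j = w j i"
  shows "(\<Sum>i\<in>UNIV. \<Sum>j\<in>UNIV. 2 * (((if i = k then 1 else 0) - (if j = k then 1 else 0)) * (u i - u j)) * w i j)
     = 4 * (\<Sum>j\<in>UNIV. w k j * (u k - u j))"
proof -
  have "(\<Sum>i\<in>UNIV. \<Sum>j\<in>UNIV. 2 * (((if i = k then 1 else 0) - (if j = k then 1 else 0)) * (u i - u j)) * w i j)
    = 2 * (\<Sum>i\<in>UNIV. \<Sum>j\<in>UNIV. (if i = k then 1 else 0) * ((u i - u j) * w i j))
      - 2 * (\<Sum>i\<in>UNIV. \<Sum>j\<in>UNIV. (if j = k then 1 else 0) * ((u i - u j) * w i j))"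
    by (simp add: sum_distrib_left sum_subtractf[symmetric] algebra_simps)
  also have "\<dots> = 2 * (\<Sum>j\<in>UNIV. (u k - u j) * w k j) - 2 * (\<Sum>i\<in>UNIV. (u i - u k) * w i k)"
    by (simp only: dsum_delta1 dsum_delta2)
  also have "(\<Sum>i\<in>UNIV. (u i - u k) * w i k) = - (\<Sum>j\<in>UNIV. w k j * (u k - u j))"
    using sym by (simp add: sum_negf[symmetric] algebra_simps)
  finally show ?thesis by (simp add: algebra_simps)
qed

locale fvprob =
  fixes v :: "'c::finite \<Rightarrow> real" and W :: "'s::finite \<Rightarrow> 'c \<Rightarrow> 'c \<Rightarrow> real"
    and r :: "'s \<Rightarrow> 'c \<Rightarrow> real" and z :: "'s \<Rightarrow> real" and a :: real
    and tt :: "'c \<Rightarrow> 'c \<Rightarrow> real" and al :: real and Dd f :: "'c \<Rightarrow> real" and k0 :: 'c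
    and R :: "('c \<times> 'c) set"
  assumes v_pos: "\<forall>i. v i > 0" and a_pos: "a > 0" and al_pos: "al > 0"
    and r_pos: "\<forall>l. (\<Sum>i\<in>UNIV. r l i) > 0"
    and W_nn: "\<forall>l i j. W l i j \<ge> 0" and W_sym: "\<forall>l i j. W l i j = W l j i"
    and W_edge: "\<forall>l i j. (i,j) \<in> R \<longrightarrow> W l i j > 0"
    and tt_nn: "\<forall>i j. tt i j \<ge> 0" and tt_sym: "\<forall>i j. tt i j = tt j i"
    and tt_edge: "\<forall>i j. (i,j) \<in> R \<longrightarrow> tt i j > 0"
    and conn: "\<forall>i j. (i,j) \<in> R\<^sup>*"
    and Dd_nn: "\<forall>i. Dd i \<ge> 0" and Dd_k0: "Dd k0 > 0"
begin

definition Es :: "'s \<Rightarrow> ('c \<Rightarrow> real) \<Rightarrow> ('c \<Rightarrow> real) \<Rightarrow> real" where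
  "Es l u psi = (\<Sum>i\<in>UNIV. v i * exp (u i - z l * psi i)) + a/4 * Qw (W l) u - (\<Sum>i\<in>UNIV. r l i * u i)"

definition Ps :: "('c \<Rightarrow> real) \<Rightarrow> real" where
  "Ps psi = al/4 * Qw tt psi + al/2 * (\<Sum>i\<in>UNIV. Dd i * (psi i)\<^sup>2) - (\<Sum>i\<in>UNIV. f i * psi i)"

definition Gf :: "('s \<Rightarrow> 'c \<Rightarrow> real) \<Rightarrow> ('c \<Rightarrow> real) \<Rightarrow> real" where
  "Gf mu psi = (\<Sum>l\<in>UNIV. Es l (mu l) psi) + Ps psi"

lemma poinc_all: "\<exists>K\<ge>0. (\<forall>l u i j. \<bar>u i - u j\<bar> \<le> K * sqrt (Qw (W l) u)) \<and> (\<forall>u i j. \<bar>u i - u j\<bar> \<le> K * sqrt (Qw tt u))"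
proof -
  have "\<forall>l. \<exists>K\<ge>0. \<forall>u i j. \<bar>u i - u j\<bar> \<le> K * sqrt (Qw (W l) u)"
  proof
    fix l show "\<exists>K\<ge>0. \<forall>u i j. \<bar>u i - u j\<bar> \<le> K * sqrt (Qw (W l) u)"
      by (rule poincare[of "W l" R]) (use W_nn W_edge conn in auto)
  qed
  then obtain Kl where Kl: "\<forall>l. Kl l \<ge> 0 \<and> (\<forall>u i j. \<bar>u i - u j\<bar> \<le> Kl l * sqrt (Qw (W l) u))" by metis
  obtain Kt where Kt: "Kt \<ge> 0" "\<forall>u i j. \<bar>u i - u j\<bar> \<le> Kt * sqrt (Qw tt u)"
    using poincare[of tt R] tt_nn tt_edge conn by auto
  define K where "K = (\<Sum>l\<in>UNIV. Kl l) + Kt"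
  have K0: "K \<ge> 0" unfolding K_def using Kl Kt by (simp add: sum_nonneg)
  have Kl_le: "Kl l \<le> K" for l
  proof -
    have "Kl l \<le> (\<Sum>l\<in>UNIV. Kl l)" by (rule member_le_sum) (use Kl in auto)
    then show ?thesis unfolding K_def using Kt by linarith
  qed
  have Kt_le: "Kt \<le> K" unfolding K_def using Kl by (simp add: sum_nonneg)
  show ?thesis
  proof (rule exI[of _ K], intro conjI allI K0)
    fix l u i j
    have "\<bar>u i - u j\<bar> \<le> Kl l * sqrt (Qw (W l) u)" using Kl by blast
    also have "\<dots> \<le> K * sqrt (Qw (W l) u)" by (rule mult_right_mono[OF Kl_le]) (use W_nn in \<open>simp add: Qw_nonneg\<close>)
    finally show "\<bar>u i - u j\<bar> \<le> K * sqrt (Qw (W l) u)" .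
  next
    fix u :: "'c \<Rightarrow> real" and i j
    have "\<bar>u i - u j\<bar> \<le> Kt * sqrt (Qw tt u)" using Kt by blast
    also have "\<dots> \<le> K * sqrt (Qw tt u)" by (rule mult_right_mono[OF Kt_le]) (use tt_nn in \<open>simp add: Qw_nonneg\<close>)
    finally show "\<bar>u i - u j\<bar> \<le> K * sqrt (Qw tt u)" .
  qed
qed

lemma Ps_lb: "\<exists>\<kappa>>0. \<exists>Fa. \<forall>psi. Ps psi \<ge> \<kappa> * (\<Sum>i\<in>UNIV. \<bar>psi i\<bar>)\<^sup>2 - Fa * (\<Sum>i\<in>UNIV. \<bar>psi i\<bar>)"
proof -
  obtain K where K: "K \<ge> 0" "\<forall>u i j. \<bar>u i - u j\<bar> \<le> K * sqrt (Qw tt u)" using poinc_all by blast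
  define N where "N = real (card (UNIV :: 'c set))"
  have N: "N > 0" unfolding N_def by simp
  define D where "D = 1 / Dd k0 + K\<^sup>2"
  have D: "D > 0" unfolding D_def using Dd_k0 by (simp add: add_pos_nonneg)
  define \<kappa> where "\<kappa> = al / (8 * N\<^sup>2 * D)"
  define Fa where "Fa = (\<Sum>i\<in>UNIV. \<bar>f i\<bar>)"
  show ?thesis
  proof (rule exI[of _ \<kappa>], rule conjI[rotated], rule exI[of _ Fa], intro allI)
    show "\<kappa> > 0" unfolding \<kappa>_def using al_pos N D by simp
  next
    fix psi :: "'c \<Rightarrow> real"
    define \<rho> where "\<rho> = (\<Sum>i\<in>UNIV. \<bar>psi i\<bar>)"
    define Qt where "Qt = Qw tt psi"
    define SD where "SD = (\<Sum>i\<in>UNIV. Dd i * (psi i)\<^sup>2)"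
    have Qt0: "Qt \<ge> 0" unfolding Qt_def by (rule Qw_nonneg[OF tt_nn])
    have SD0: "SD \<ge> 0" unfolding SD_def using Dd_nn by (simp add: sum_nonneg)
    have rle: "\<bar>psi i\<bar> \<le> \<rho>" for i unfolding \<rho>_def by (rule member_le_sum) auto
    have k0b: "Dd k0 * (psi k0)\<^sup>2 \<le> SD" unfolding SD_def
      by (rule member_le_sum[of k0, where f="\<lambda>i. Dd i * (psi i)\<^sup>2"]) (use Dd_nn in auto)
    have k0c: "(psi k0)\<^sup>2 \<le> D * SD"
    proof -
      have "(psi k0)\<^sup>2 \<le> SD / Dd k0" using k0b Dd_k0 by (simp add: field_simps)
      also have "\<dots> = (1 / Dd k0) * SD" by simp
      also have "\<dots> \<le> D * SD" by (rule mult_right_mono) (use SD0 D_def in auto)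
      finally show ?thesis .
    qed
    have pi: "\<bar>psi i\<bar> \<le> \<bar>psi k0\<bar> + K * sqrt Qt" for i
      using K(2)[rule_format, of psi i k0] unfolding Qt_def by linarith
    have "\<rho> \<le> (\<Sum>i\<in>(UNIV::'c set). \<bar>psi k0\<bar> + K * sqrt Qt)" unfolding \<rho>_def using pi by (intro sum_mono) auto
    then have rb: "\<rho> \<le> N * (\<bar>psi k0\<bar> + K * sqrt Qt)" unfolding N_def by simp
    have r0: "\<rho> \<ge> 0" unfolding \<rho>_def by (simp add: sum_nonneg)
    have "\<rho>\<^sup>2 \<le> (N * (\<bar>psi k0\<bar> + K * sqrt Qt))\<^sup>2" by (rule power_mono[OF rb r0])
    also have "\<dots> = N\<^sup>2 * (\<bar>psi k0\<bar> + K * sqrt Qt)\<^sup>2" by (simp add: power_mult_distrib)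
    also have "\<dots> \<le> N\<^sup>2 * (2 * ((psi k0)\<^sup>2 + K\<^sup>2 * Qt))"
    proof (rule mult_left_mono)
      have "(\<bar>psi k0\<bar> + K * sqrt Qt)\<^sup>2 \<le> 2 * ((\<bar>psi k0\<bar>)\<^sup>2 + (K * sqrt Qt)\<^sup>2)"
        using zero_le_power2[of "\<bar>psi k0\<bar> - K * sqrt Qt"] by (simp add: power2_eq_square algebra_simps)
      also have "(K * sqrt Qt)\<^sup>2 = K\<^sup>2 * Qt" using Qt0 by (simp add: power_mult_distrib)
      finally show "(\<bar>psi k0\<bar> + K * sqrt Qt)\<^sup>2 \<le> 2 * ((psi k0)\<^sup>2 + K\<^sup>2 * Qt)" by simp
    qed simp
    also have "\<dots> \<le> N\<^sup>2 * (2 * (D * SD + D * Qt))"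
    proof -
      have "K\<^sup>2 * Qt \<le> D * Qt" by (rule mult_right_mono) (use Qt0 Dd_k0 D_def in auto)
      then show ?thesis using k0c by (intro mult_left_mono) auto
    qed
    finally have rr: "\<rho>\<^sup>2 \<le> 2 * N\<^sup>2 * D * (SD + Qt)" by (simp add: algebra_simps)
    have kr: "\<kappa> * \<rho>\<^sup>2 \<le> al/4 * (SD + Qt)"
    proof -
      have "\<kappa> * \<rho>\<^sup>2 \<le> \<kappa> * (2 * N\<^sup>2 * D * (SD + Qt))"
        by (rule mult_left_mono[OF rr]) (use al_pos N D in \<open>simp add: \<kappa>_def\<close>)
      also have "\<dots> = al/4 * (SD + Qt)" unfolding \<kappa>_def using N D by (simp add: field_simps)
      finally show ?thesis .
    qed
    have fb: "(\<Sum>i\<in>UNIV. f i * psi i) \<le> Fa * \<rho>"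
    proof -
      have "(\<Sum>i\<in>UNIV. f i * psi i) \<le> (\<Sum>i\<in>UNIV. \<bar>f i\<bar> * \<rho>)"
      proof (rule sum_mono)
        fix i
        have "f i * psi i \<le> \<bar>f i\<bar> * \<bar>psi i\<bar>" by (metis abs_ge_self abs_mult)
        also have "\<dots> \<le> \<bar>f i\<bar> * \<rho>" by (rule mult_left_mono[OF rle]) simp
        finally show "f i * psi i \<le> \<bar>f i\<bar> * \<rho>" .
      qed
      then show ?thesis unfolding Fa_def by (simp add: sum_distrib_right)
    qed
    have "Ps psi = al/4 * Qt + al/2 * SD - (\<Sum>i\<in>UNIV. f i * psi i)" unfolding Ps_def Qt_def SD_def by simp
    moreover have "al/4 * (SD + Qt) \<le> al/4 * Qt + al/2 * SD" using al_pos SD0 by (simp add: algebra_simps)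
    ultimately show "Ps psi \<ge> \<kappa> * (\<Sum>i\<in>UNIV. \<bar>psi i\<bar>)\<^sup>2 - Fa * (\<Sum>i\<in>UNIV. \<bar>psi i\<bar>)"
      using kr fb unfolding \<rho>_def by linarith
  qed
qed

lemma coercive: "\<exists>B. \<forall>mu psi. Gf mu psi \<le> C \<longrightarrow> (\<forall>l i. \<bar>mu l i\<bar> \<le> B) \<and> (\<forall>i. \<bar>psi i\<bar> \<le> B)"
proof -
  obtain K where K: "K \<ge> 0" "\<forall>l u i j. \<bar>u i - u j\<bar> \<le> K * sqrt (Qw (W l) u)"
    using poinc_all by blast
  have "\<forall>l. \<exists>m>0. \<exists>K0 c. \<forall>u psi \<rho>. (\<forall>i. \<bar>psi i\<bar> \<le> \<rho>) \<longrightarrow>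
          Es l u psi \<ge> m * \<bar>u k0 - z l * psi k0\<bar> + a/8 * Qw (W l) u - K0 - c * \<rho>"
  proof
    fix l
    show "\<exists>m>0. \<exists>K0 c. \<forall>u psi \<rho>. (\<forall>i. \<bar>psi i\<bar> \<le> \<rho>) \<longrightarrow>
          Es l u psi \<ge> m * \<bar>u k0 - z l * psi k0\<bar> + a/8 * Qw (W l) u - K0 - c * \<rho>"
      unfolding Es_def
      by (rule species_lb[of v a "r l" K "W l"]) (use v_pos a_pos r_pos K W_nn in auto)
  qed
  then obtain m K0 c where mKc: "\<forall>l. m l > 0 \<and> (\<forall>u psi \<rho>. (\<forall>i. \<bar>psi i\<bar> \<le> \<rho>) \<longrightarrow>
          Es l u psi \<ge> m l * \<bar>u k0 - z l * psi k0\<bar> + a/8 * Qw (W l) u - K0 l - c l * \<rho>)"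
    by metis
  have mpos: "m l > 0" for l using mKc by blast
  obtain \<kappa> Fa where kF: "\<kappa> > 0" "\<forall>psi. Ps psi \<ge> \<kappa> * (\<Sum>i\<in>UNIV. \<bar>psi i\<bar>)\<^sup>2 - Fa * (\<Sum>i\<in>UNIV. \<bar>psi i\<bar>)"
    using Ps_lb by blast
  define Ks where "Ks = (\<Sum>l\<in>UNIV. K0 l)"
  define Cs where "Cs = (\<Sum>l\<in>UNIV. c l) + Fa"
  define C' where "C' = C + Ks + Cs\<^sup>2 / (2 * \<kappa>)"
  define Bp where "Bp = sqrt (2 * C' / \<kappa>)"
  define B where "B = Bp + (\<Sum>l\<in>UNIV. C' / m l + \<bar>z l\<bar> * Bp) + K * sqrt (8 * C' / a)"
  show ?thesis
  proof (rule exI[of _ B], intro allI impI)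
    fix mu :: "'s \<Rightarrow> 'c \<Rightarrow> real" and psi :: "'c \<Rightarrow> real"
    assume G: "Gf mu psi \<le> C"
    define \<rho> where "\<rho> = (\<Sum>i\<in>UNIV. \<bar>psi i\<bar>)"
    have r0: "\<rho> \<ge> 0" unfolding \<rho>_def by (simp add: sum_nonneg)
    have rle: "\<forall>i. \<bar>psi i\<bar> \<le> \<rho>" unfolding \<rho>_def by (intro allI member_le_sum) auto
    define A where "A l = m l * \<bar>mu l k0 - z l * psi k0\<bar> + a/8 * Qw (W l) (mu l)" for l
    have A0: "A l \<ge> 0" for l unfolding A_def using mKc[rule_format, of l] a_pos Qw_nonneg[of "W l" "mu l"] W_nn
      by (intro add_nonneg_nonneg mult_nonneg_nonneg) (auto simp: less_imp_le)
    have El: "Es l (mu l) psi \<ge> A l - K0 l - c l * \<rho>" for l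
      using mKc rle unfolding A_def by auto
    have "(\<Sum>l\<in>UNIV. A l - K0 l - c l * \<rho>) \<le> (\<Sum>l\<in>UNIV. Es l (mu l) psi)"
      by (rule sum_mono) (rule El)
    moreover have "(\<Sum>l\<in>UNIV. A l - K0 l - c l * \<rho>) = (\<Sum>l\<in>UNIV. A l) - Ks - (\<Sum>l\<in>UNIV. c l) * \<rho>"
      unfolding Ks_def by (simp add: sum_subtractf sum_distrib_right)
    moreover have "Ps psi \<ge> \<kappa> * \<rho>\<^sup>2 - Fa * \<rho>" using kF unfolding \<rho>_def by blast
    moreover have "\<kappa> * \<rho>\<^sup>2 - Cs * \<rho> \<ge> \<kappa>/2 * \<rho>\<^sup>2 - Cs\<^sup>2 / (2 * \<kappa>)"
    proof -
      have "2 * \<kappa> * (\<kappa>/2 * \<rho>\<^sup>2 - Cs * \<rho> + Cs\<^sup>2 / (2 * \<kappa>)) = (\<kappa> * \<rho> - Cs)\<^sup>2"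
        using kF(1) by (simp add: power2_eq_square field_simps)
      then have "2 * \<kappa> * (\<kappa>/2 * \<rho>\<^sup>2 - Cs * \<rho> + Cs\<^sup>2 / (2 * \<kappa>)) \<ge> 0" by simp
      then have "\<kappa>/2 * \<rho>\<^sup>2 - Cs * \<rho> + Cs\<^sup>2 / (2 * \<kappa>) \<ge> 0" using kF(1) by (simp add: zero_le_mult_iff)
      then show ?thesis by linarith
    qed
    moreover have "Cs * \<rho> = (\<Sum>l\<in>UNIV. c l) * \<rho> + Fa * \<rho>" unfolding Cs_def by (simp add: algebra_simps)
    moreover have "Gf mu psi = (\<Sum>l\<in>UNIV. Es l (mu l) psi) + Ps psi" unfolding Gf_def by simp
    ultimately have tot: "(\<Sum>l\<in>UNIV. A l) + \<kappa>/2 * \<rho>\<^sup>2 \<le> C'" using G unfolding C'_def by linarith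
    have SA0: "(\<Sum>l\<in>UNIV. A l) \<ge> 0" using A0 by (simp add: sum_nonneg)
    have kr0: "\<kappa>/2 * \<rho>\<^sup>2 \<ge> 0" using kF(1) by simp
    have C'0: "C' \<ge> 0" using tot SA0 kr0 by linarith
    have Al: "A l \<le> C'" for l
    proof -
      have "A l \<le> (\<Sum>l\<in>UNIV. A l)" by (rule member_le_sum) (use A0 in auto)
      then show ?thesis using tot kr0 by linarith
    qed
    have rho2: "\<rho>\<^sup>2 \<le> 2 * C' / \<kappa>"
    proof -
      have "\<kappa>/2 * \<rho>\<^sup>2 \<le> C'" using tot SA0 by linarith
      then show ?thesis using kF(1) by (simp add: field_simps)
    qed
    have rB: "\<rho> \<le> Bp" unfolding Bp_def using real_sqrt_le_mono[OF rho2] r0 by simp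
    have Bp0: "Bp \<ge> 0" unfolding Bp_def using C'0 kF(1) by simp
    have sl: "\<bar>mu l k0 - z l * psi k0\<bar> \<le> C' / m l" for l
    proof -
      have q0: "Qw (W l) (mu l) \<ge> 0" using Qw_nonneg[of "W l" "mu l"] W_nn by blast
      have "a/8 * Qw (W l) (mu l) \<ge> 0" using a_pos q0 by simp
      then have "m l * \<bar>mu l k0 - z l * psi k0\<bar> \<le> C'"
        using Al[of l] unfolding A_def by linarith
      then show ?thesis using mKc by (simp add: field_simps)
    qed
    have Ql: "Qw (W l) (mu l) \<le> 8 * C' / a" for l
    proof -
      have "m l * \<bar>mu l k0 - z l * psi k0\<bar> \<ge> 0" using mKc[rule_format, of l] by (simp add: less_imp_le)
      then have "a/8 * Qw (W l) (mu l) \<le> C'"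
        using Al[of l] unfolding A_def by linarith
      then show ?thesis using a_pos by (simp add: field_simps)
    qed
    have mk0: "\<bar>mu l k0\<bar> \<le> C' / m l + \<bar>z l\<bar> * Bp" for l
    proof -
      have "\<bar>z l * psi k0\<bar> \<le> \<bar>z l\<bar> * Bp" unfolding abs_mult
        using rle rB by (intro mult_left_mono) (auto intro: order_trans)
      then show ?thesis using sl[of l] by linarith
    qed
    have psiB: "\<forall>i. \<bar>psi i\<bar> \<le> B"
    proof
      fix i
      have "0 \<le> (\<Sum>l\<in>UNIV. C' / m l + \<bar>z l\<bar> * Bp)"
        using C'0 Bp0 mpos by (intro sum_nonneg add_nonneg_nonneg) (auto intro: divide_nonneg_pos)
      moreover have "0 \<le> K * sqrt (8 * C' / a)" using K C'0 a_pos by simp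
      ultimately show "\<bar>psi i\<bar> \<le> B" unfolding B_def using rle rB by (meson add_increasing2 order_trans)
    qed
    have muB: "\<forall>l i. \<bar>mu l i\<bar> \<le> B"
    proof (intro allI)
      fix l i
      have "\<bar>mu l i - mu l k0\<bar> \<le> K * sqrt (Qw (W l) (mu l))" using K by blast
      also have "\<dots> \<le> K * sqrt (8 * C' / a)" using K Ql[of l] by (intro mult_left_mono real_sqrt_le_mono) auto
      finally have d: "\<bar>mu l i - mu l k0\<bar> \<le> K * sqrt (8 * C' / a)" .
      have "C' / m l + \<bar>z l\<bar> * Bp \<le> (\<Sum>l\<in>UNIV. C' / m l + \<bar>z l\<bar> * Bp)"
        by (rule member_le_sum) (use C'0 Bp0 mpos in \<open>auto intro!: add_nonneg_nonneg divide_nonneg_pos\<close>)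
      then show "\<bar>mu l i\<bar> \<le> B" unfolding B_def using d mk0[of l] Bp0 by linarith
    qed
    show "(\<forall>l i. \<bar>mu l i\<bar> \<le> B) \<and> (\<forall>i. \<bar>psi i\<bar> \<le> B)" using muB psiB by blast
  qed
qed

lemma min_exists: "\<exists>mu psi. \<forall>mu' psi'. Gf mu psi \<le> Gf mu' psi'"
proof -
  define toMu :: "real^('s option \<times> 'c) \<Rightarrow> 's \<Rightarrow> 'c \<Rightarrow> real" where "toMu x = (\<lambda>l i. x$(Some l, i))" for x
  define toPsi :: "real^('s option \<times> 'c) \<Rightarrow> 'c \<Rightarrow> real" where "toPsi x = (\<lambda>i. x$(None, i))" for x
  define H where "H x = Gf (toMu x) (toPsi x)" for x
  have cont: "continuous_on UNIV H"
    unfolding H_def Gf_def Es_def Ps_def Qw_def toMu_def toPsi_def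
    by (intro continuous_intros)
  define S where "S = {x. H x \<le> H 0}"
  have closed: "closed S" unfolding S_def
    by (rule closed_Collect_le[OF cont continuous_on_const])
  obtain B where B: "\<forall>mu psi. Gf mu psi \<le> H 0 \<longrightarrow> (\<forall>l i. \<bar>mu l i\<bar> \<le> B) \<and> (\<forall>i. \<bar>psi i\<bar> \<le> B)"
    using coercive by blast
  have bnd: "bounded S"
    unfolding bounded_iff
  proof (rule exI[of _ "real (CARD('s option \<times> 'c)) * B"], intro ballI)
    fix x assume "x \<in> S"
    then have "Gf (toMu x) (toPsi x) \<le> H 0" unfolding S_def H_def by simp
    then have bb: "(\<forall>l i. \<bar>toMu x l i\<bar> \<le> B) \<and> (\<forall>i. \<bar>toPsi x i\<bar> \<le> B)" using B by blast
    have cj: "\<bar>x$j\<bar> \<le> B" for j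
    proof (cases j)
      case (Pair jo i) then show ?thesis
        using bb by (cases jo) (auto simp: toMu_def toPsi_def)
    qed
    have "norm x \<le> (\<Sum>j\<in>UNIV. \<bar>x$j\<bar>)" by (rule norm_le_l1_cart)
    also have "\<dots> \<le> (\<Sum>j\<in>(UNIV::('s option \<times> 'c) set). B)" by (rule sum_mono) (rule cj)
    finally show "norm x \<le> real (CARD('s option \<times> 'c)) * B" by simp
  qed
  have cpt: "compact S" using bnd closed by (simp add: compact_eq_bounded_closed)
  have ne: "S \<noteq> {}" unfolding S_def by auto
  obtain x0 where x0: "x0 \<in> S" "\<forall>y\<in>S. H x0 \<le> H y"
    using continuous_attains_inf[OF cpt ne continuous_on_subset[OF cont]] by auto
  show ?thesis
  proof (rule exI[of _ "toMu x0"], rule exI[of _ "toPsi x0"], intro allI)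
    fix mu' psi'
    define y :: "real^('s option \<times> 'c)" where
      "y = (\<chi> j. case j of (None, i) \<Rightarrow> psi' i | (Some l, i) \<Rightarrow> mu' l i)"
    have "toMu y = mu'" "toPsi y = psi'" unfolding y_def toMu_def toPsi_def by auto
    then have Hy: "H y = Gf mu' psi'" unfolding H_def by simp
    have "H x0 \<le> H y"
    proof (cases "y \<in> S")
      case True then show ?thesis using x0 by blast
    next
      case False then have "H y > H 0" unfolding S_def by simp
      moreover have "H x0 \<le> H 0" using x0(1) unfolding S_def by simp
      ultimately show ?thesis by simp
    qed
    then show "Gf (toMu x0) (toPsi x0) \<le> Gf mu' psi'" using Hy unfolding H_def by simp
  qed
qed

end

context fvprob begin

definition dG where
 "dG mu psi E e =
   (\<Sum>n\<in>UNIV.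
        (\<Sum>na\<in>UNIV.
           exp (mu n na - z n * psi na) * (E n na - e na * z n) * v na) +
        a *
        (\<Sum>na\<in>UNIV.
           \<Sum>nb\<in>UNIV.
             2 * ((E n na - E n nb) * (mu n na - mu n nb)) * W n na nb) /
        4 -
        (\<Sum>na\<in>UNIV. E n na * r n na)) +
     (al *
      (\<Sum>n\<in>UNIV. \<Sum>na\<in>UNIV. 2 * ((e n - e na) * (psi n - psi na)) * tt n na) /
      4 +
      al * (\<Sum>n\<in>UNIV. 2 * (e n * psi n) * Dd n) / 2 -
      (\<Sum>n\<in>UNIV. e n * f n))"

lemma Gf_deriv: "((\<lambda>t. Gf (\<lambda>l i. mu l i + t * E l i) (\<lambda>i. psi i + t * e i)) has_real_derivative dG mu psi E e) (at 0)"
  unfolding Gf_def Es_def Ps_def Qw_def dG_def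
  apply (auto intro!: derivative_eq_intros)
  done

end

context fvprob begin

lemma grad_zero:
  assumes min: "\<forall>mu' psi'. Gf mu psi \<le> Gf mu' psi'"
  shows "dG mu psi E e = 0"
proof (rule DERIV_local_min[OF Gf_deriv, of 1])
  show "\<forall>y. \<bar>0 - y\<bar> < 1 \<longrightarrow> Gf (\<lambda>l i. mu l i + 0 * E l i) (\<lambda>i. psi i + 0 * e i)
     \<le> Gf (\<lambda>l i. mu l i + y * E l i) (\<lambda>i. psi i + y * e i)"
    using min by simp
qed simp

lemma grad_mu:
  assumes min: "\<forall>mu' psi'. Gf mu psi \<le> Gf mu' psi'"
  shows "v k * exp (mu l0 k - z l0 * psi k) + a * (\<Sum>j\<in>UNIV. W l0 k j * (mu l0 k - mu l0 j)) - r l0 k = 0"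
proof -
  define E where "E n na = (if n = l0 then (if na = k then 1 else 0) else 0 :: real)" for n na
  define F where "F n = (\<Sum>na\<in>UNIV.
           exp (mu n na - z n * psi na) * (E n na - 0 * z n) * v na) +
        a *
        (\<Sum>na\<in>UNIV.
           \<Sum>nb\<in>UNIV.
             2 * ((E n na - E n nb) * (mu n na - mu n nb)) * W n na nb) /
        4 -
        (\<Sum>na\<in>UNIV. E n na * r n na)" for n
  have "dG mu psi E (\<lambda>_. 0) = 0" by (rule grad_zero[OF min])
  then have d0: "(\<Sum>n\<in>UNIV. F n) = 0" unfolding dG_def F_def by simp
  have Fz: "F n = 0" if "n \<noteq> l0" for n using that unfolding F_def E_def by simp
  have "(\<Sum>n\<in>UNIV. F n) = F l0 + (\<Sum>n\<in>UNIV - {l0}. F n)"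
    by (simp add: sum.remove)
  also have "(\<Sum>n\<in>UNIV - {l0}. F n) = 0" using Fz by (intro sum.neutral) auto
  finally have F0: "F l0 = 0" using d0 by simp
  have t1: "(\<Sum>na\<in>UNIV. exp (mu l0 na - z l0 * psi na) * (E l0 na - 0 * z l0) * v na) = v k * exp (mu l0 k - z l0 * psi k)"
  proof -
    have "(\<Sum>na\<in>UNIV. exp (mu l0 na - z l0 * psi na) * (E l0 na - 0 * z l0) * v na)
        = (\<Sum>na\<in>UNIV. (if na = k then 1 else 0) * (exp (mu l0 na - z l0 * psi na) * v na))"
      unfolding E_def by (intro sum.cong) auto
    then show ?thesis by (simp add: sum_delta1)
  qed
  have t2: "(\<Sum>na\<in>UNIV. \<Sum>nb\<in>UNIV. 2 * ((E l0 na - E l0 nb) * (mu l0 na - mu l0 nb)) * W l0 na nb)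
      = 4 * (\<Sum>j\<in>UNIV. W l0 k j * (mu l0 k - mu l0 j))"
    unfolding E_def using quad_delta[of "W l0" k "mu l0"] W_sym by simp
  have t3: "(\<Sum>na\<in>UNIV. E l0 na * r l0 na) = r l0 k"
    unfolding E_def by (simp add: sum_delta1)
  show ?thesis using F0 unfolding F_def t1 t2 t3 by simp
qed

lemma grad_psi:
  assumes min: "\<forall>mu' psi'. Gf mu psi \<le> Gf mu' psi'"
  shows "- (\<Sum>l\<in>UNIV. v k * z l * exp (mu l k - z l * psi k)) + al * (\<Sum>j\<in>UNIV. tt k j * (psi k - psi j))
     + al * Dd k * psi k - f k = 0"
proof -
  define e where "e na = (if na = k then 1 else 0 :: real)" for na
  have "dG mu psi (\<lambda>_ _. 0) e = 0" by (rule grad_zero[OF min])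
  then have d0: "(\<Sum>n\<in>UNIV. (\<Sum>na\<in>UNIV. exp (mu n na - z n * psi na) * (0 - e na * z n) * v na)) +
     (al * (\<Sum>n\<in>UNIV. \<Sum>na\<in>UNIV. 2 * ((e n - e na) * (psi n - psi na)) * tt n na) / 4 +
      al * (\<Sum>n\<in>UNIV. 2 * (e n * psi n) * Dd n) / 2 - (\<Sum>n\<in>UNIV. e n * f n)) = 0"
    unfolding dG_def by simp
  have t1: "(\<Sum>na\<in>UNIV. exp (mu n na - z n * psi na) * (0 - e na * z n) * v na) = - (v k * z n * exp (mu n k - z n * psi k))" for n
  proof -
    have "(\<Sum>na\<in>UNIV. exp (mu n na - z n * psi na) * (0 - e na * z n) * v na)
        = - (\<Sum>na\<in>UNIV. (if na = k then 1 else 0) * (v na * z n * exp (mu n na - z n * psi na)))"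
      unfolding e_def sum_negf[symmetric] by (intro sum.cong) auto
    then show ?thesis by (simp only: sum_delta1)
  qed
  have t2: "(\<Sum>n\<in>UNIV. \<Sum>na\<in>UNIV. 2 * ((e n - e na) * (psi n - psi na)) * tt n na) = 4 * (\<Sum>j\<in>UNIV. tt k j * (psi k - psi j))"
    unfolding e_def using quad_delta[of tt k psi] tt_sym by simp
  have t3: "(\<Sum>n\<in>UNIV. 2 * (e n * psi n) * Dd n) = 2 * (Dd k * psi k)"
  proof -
    have "(\<Sum>n\<in>UNIV. 2 * (e n * psi n) * Dd n) = (\<Sum>n\<in>UNIV. (if n = k then 1 else 0) * (2 * (Dd n * psi n)))"
      unfolding e_def by (intro sum.cong) auto
    then show ?thesis by (simp add: sum_delta1)
  qed
  have t4: "(\<Sum>n\<in>UNIV. e n * f n) = f k" unfolding e_def by (simp add: sum_delta1)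
  have "(\<Sum>n\<in>UNIV. (\<Sum>na\<in>UNIV. exp (mu n na - z n * psi na) * (0 - e na * z n) * v na)) = - (\<Sum>l\<in>UNIV. v k * z l * exp (mu l k - z l * psi k))"
    unfolding t1 by (simp add: sum_negf)
  then show ?thesis using d0 unfolding t2 t3 t4 by (simp add: algebra_simps)
qed

end

lemma energy_sym:
  fixes w :: "'c::finite \<Rightarrow> 'c \<Rightarrow> real"
  assumes sym: "\<forall>i j. w i j = w j i"
  shows "(\<Sum>k\<in>UNIV. u k * (\<Sum>j\<in>UNIV. w k j * (u k - u j))) = Qw w u / 2"
proof -
  define S where "S = (\<Sum>k\<in>UNIV. \<Sum>j\<in>UNIV. w k j * (u k * (u k - u j)))"
  have S1: "(\<Sum>k\<in>UNIV. u k * (\<Sum>j\<in>UNIV. w k j * (u k - u j))) = S"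
    unfolding S_def by (simp add: sum_distrib_left algebra_simps)
  have "S = (\<Sum>j\<in>UNIV. \<Sum>k\<in>UNIV. w k j * (u k * (u k - u j)))" unfolding S_def by (rule sum.swap)
  also have "\<dots> = (\<Sum>k\<in>UNIV. \<Sum>j\<in>UNIV. w k j * (u j * (u j - u k)))"
    using sym by simp
  finally have S2: "S = (\<Sum>k\<in>UNIV. \<Sum>j\<in>UNIV. w k j * (u j * (u j - u k)))" .
  have "2 * S = (\<Sum>k\<in>UNIV. \<Sum>j\<in>UNIV. w k j * (u k * (u k - u j)) + w k j * (u j * (u j - u k)))"
    using S2 unfolding S_def by (simp add: sum.distrib)
  also have "\<dots> = Qw w u" unfolding Qw_def by (intro sum.cong refl) (simp add: power2_eq_square algebra_simps)
  finally show ?thesis using S1 by simp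
qed

context fvprob begin

lemma uniq:
  fixes c c' :: "'s \<Rightarrow> 'c \<Rightarrow> real" and psi psi' :: "'c \<Rightarrow> real"
  assumes cp: "\<forall>l i. c l i > 0" and cp': "\<forall>l i. c' l i > 0"
    and E1: "\<forall>l k. v k * c l k + a * (\<Sum>j\<in>UNIV. W l k j * ((ln (c l k) + z l * psi k) - (ln (c l j) + z l * psi j))) = r l k"
    and E1': "\<forall>l k. v k * c' l k + a * (\<Sum>j\<in>UNIV. W l k j * ((ln (c' l k) + z l * psi' k) - (ln (c' l j) + z l * psi' j))) = r l k"
    and E2: "\<forall>k. al * (\<Sum>j\<in>UNIV. tt k j * (psi k - psi j)) + al * Dd k * psi k - f k = (\<Sum>l\<in>UNIV. v k * z l * c l k)"
    and E2': "\<forall>k. al * (\<Sum>j\<in>UNIV. tt k j * (psi' k - psi' j)) + al * Dd k * psi' k - f k = (\<Sum>l\<in>UNIV. v k * z l * c' l k)"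
  shows "c = c' \<and> psi = psi'"
proof -
  define dc where "dc l k = c l k - c' l k" for l k
  define dlc where "dlc l k = ln (c l k) - ln (c' l k)" for l k
  define dp where "dp k = psi k - psi' k" for k
  define dm where "dm l k = dlc l k + z l * dp k" for l k
  have A: "v k * dc l k + a * (\<Sum>j\<in>UNIV. W l k j * (dm l k - dm l j)) = 0" for l k
  proof -
    have "(\<Sum>j\<in>UNIV. W l k j * ((ln (c l k) + z l * psi k) - (ln (c l j) + z l * psi j)))
        - (\<Sum>j\<in>UNIV. W l k j * ((ln (c' l k) + z l * psi' k) - (ln (c' l j) + z l * psi' j)))
        = (\<Sum>j\<in>UNIV. W l k j * (dm l k - dm l j))"
      unfolding sum_subtractf[symmetric] dm_def dlc_def dp_def by (intro sum.cong refl) (simp add: algebra_simps)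
    then show ?thesis using E1[rule_format, where l=l and k=k] E1'[rule_format, where l=l and k=k] unfolding dc_def
      by (simp add: algebra_simps)
  qed
  have C2: "al * (\<Sum>j\<in>UNIV. tt k j * (dp k - dp j)) + al * Dd k * dp k = (\<Sum>l\<in>UNIV. v k * z l * dc l k)" for k
  proof -
    have "(\<Sum>j\<in>UNIV. tt k j * (psi k - psi j)) - (\<Sum>j\<in>UNIV. tt k j * (psi' k - psi' j)) = (\<Sum>j\<in>UNIV. tt k j * (dp k - dp j))"
      unfolding sum_subtractf[symmetric] dp_def by (intro sum.cong refl) (simp add: algebra_simps)
    moreover have "(\<Sum>l\<in>UNIV. v k * z l * c l k) - (\<Sum>l\<in>UNIV. v k * z l * c' l k) = (\<Sum>l\<in>UNIV. v k * z l * dc l k)"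
      unfolding sum_subtractf[symmetric] dc_def by (intro sum.cong refl) (simp add: algebra_simps)
    ultimately show ?thesis using E2[rule_format, of k] E2'[rule_format, of k] unfolding dp_def
      by (simp add: algebra_simps)
  qed
  define X where "X = (\<Sum>l\<in>UNIV. \<Sum>k\<in>UNIV. v k * dc l k * dlc l k)"
  have "0 = (\<Sum>l\<in>UNIV. \<Sum>k\<in>UNIV. dm l k * (v k * dc l k + a * (\<Sum>j\<in>UNIV. W l k j * (dm l k - dm l j))))"
    using A by simp
  also have "\<dots> = (\<Sum>l\<in>UNIV. \<Sum>k\<in>UNIV. dm l k * (v k * dc l k)) + a * (\<Sum>l\<in>UNIV. \<Sum>k\<in>UNIV. dm l k * (\<Sum>j\<in>UNIV. W l k j * (dm l k - dm l j)))"
    by (simp add: sum.distrib sum_distrib_left distrib_left algebra_simps)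
  also have "(\<Sum>l\<in>UNIV. \<Sum>k\<in>UNIV. dm l k * (\<Sum>j\<in>UNIV. W l k j * (dm l k - dm l j))) = (\<Sum>l\<in>UNIV. Qw (W l) (dm l) / 2)"
  proof (rule sum.cong[OF refl])
    fix l show "(\<Sum>k\<in>UNIV. dm l k * (\<Sum>j\<in>UNIV. W l k j * (dm l k - dm l j))) = Qw (W l) (dm l) / 2"
      by (rule energy_sym) (use W_sym in auto)
  qed
  also have "(\<Sum>l\<in>UNIV. \<Sum>k\<in>UNIV. dm l k * (v k * dc l k)) = X + (\<Sum>k\<in>UNIV. dp k * (\<Sum>l\<in>UNIV. v k * z l * dc l k))"
  proof -
    have "(\<Sum>l\<in>UNIV. \<Sum>k\<in>UNIV. dm l k * (v k * dc l k)) = X + (\<Sum>l\<in>UNIV. \<Sum>k\<in>UNIV. dp k * (v k * z l * dc l k))"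
      unfolding X_def dm_def by (simp add: sum.distrib[symmetric] algebra_simps)
    also have "(\<Sum>l\<in>UNIV. \<Sum>k\<in>UNIV. dp k * (v k * z l * dc l k)) = (\<Sum>k\<in>UNIV. dp k * (\<Sum>l\<in>UNIV. v k * z l * dc l k))"
      by (subst sum.swap) (simp add: sum_distrib_left)
    finally show ?thesis .
  qed
  also have "(\<Sum>k\<in>UNIV. dp k * (\<Sum>l\<in>UNIV. v k * z l * dc l k)) = al * (Qw tt dp / 2) + al * (\<Sum>k\<in>UNIV. Dd k * (dp k)\<^sup>2)"
  proof -
    have "(\<Sum>k\<in>UNIV. dp k * (\<Sum>l\<in>UNIV. v k * z l * dc l k)) = (\<Sum>k\<in>UNIV. dp k * (al * (\<Sum>j\<in>UNIV. tt k j * (dp k - dp j)) + al * Dd k * dp k))"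
      using C2 by simp
    also have "\<dots> = al * (\<Sum>k\<in>UNIV. dp k * (\<Sum>j\<in>UNIV. tt k j * (dp k - dp j))) + al * (\<Sum>k\<in>UNIV. Dd k * (dp k)\<^sup>2)"
      by (simp add: sum.distrib sum_distrib_left distrib_left power2_eq_square algebra_simps)
    also have "(\<Sum>k\<in>UNIV. dp k * (\<Sum>j\<in>UNIV. tt k j * (dp k - dp j))) = Qw tt dp / 2"
      by (rule energy_sym[OF tt_sym])
    finally show ?thesis .
  qed
  finally have tot: "0 = X + (al * (Qw tt dp / 2) + al * (\<Sum>k\<in>UNIV. Dd k * (dp k)\<^sup>2)) + a * (\<Sum>l\<in>UNIV. Qw (W l) (dm l) / 2)" .
  have Xt: "v k * dc l k * dlc l k \<ge> 0" for l k
  proof -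
    have "dc l k * dlc l k \<ge> 0"
    proof (cases "c l k \<le> c' l k")
      case True
      then have "ln (c l k) \<le> ln (c' l k)" using cp cp' by simp
      then show ?thesis using True unfolding dc_def dlc_def by (simp add: mult_nonpos_nonpos)
    next
      case False
      then have "ln (c l k) \<ge> ln (c' l k)" using cp cp' by simp
      then show ?thesis using False unfolding dc_def dlc_def by simp
    qed
    then show ?thesis using v_pos[rule_format, of k] by (simp add: mult.assoc less_imp_le)
  qed
  have X0: "X \<ge> 0" unfolding X_def using Xt by (intro sum_nonneg) auto
  have Q10: "Qw tt dp \<ge> 0" by (rule Qw_nonneg[OF tt_nn])
  have D0: "(\<Sum>k\<in>UNIV. Dd k * (dp k)\<^sup>2) \<ge> 0" using Dd_nn by (intro sum_nonneg) simp
  have Q20: "(\<Sum>l\<in>UNIV. Qw (W l) (dm l) / 2) \<ge> 0" using W_nn by (intro sum_nonneg) (simp add: Qw_nonneg)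
  have p1: "al * (Qw tt dp / 2) \<ge> 0" using al_pos Q10 by simp
  have p2: "al * (\<Sum>k\<in>UNIV. Dd k * (dp k)\<^sup>2) \<ge> 0" using al_pos D0 by simp
  have p3: "a * (\<Sum>l\<in>UNIV. Qw (W l) (dm l) / 2) \<ge> 0" using a_pos Q20 by simp
  have Xz: "X = 0" using tot X0 p1 p2 p3 by linarith
  have Qz: "Qw tt dp = 0" using tot X0 p1 p2 p3 al_pos Q10 by (smt (verit) mult_pos_pos divide_pos_pos)
  have Dz: "(\<Sum>k\<in>UNIV. Dd k * (dp k)\<^sup>2) = 0" using tot X0 p1 p2 p3 al_pos D0 by (smt (verit) mult_pos_pos)
  have ceq: "c = c'"
  proof (intro ext)
    fix l k
    have "(\<Sum>k\<in>UNIV. v k * dc l k * dlc l k) = 0"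
    proof -
      have "(\<Sum>l\<in>UNIV. \<Sum>k\<in>UNIV. v k * dc l k * dlc l k) = 0" using Xz X_def by simp
      then have "\<forall>l\<in>UNIV. (\<Sum>k\<in>UNIV. v k * dc l k * dlc l k) = 0"
        by (subst (asm) sum_nonneg_eq_0_iff) (auto intro: sum_nonneg Xt)
      then show ?thesis by simp
    qed
    then have "\<forall>k\<in>UNIV. v k * dc l k * dlc l k = 0"
      by (subst (asm) sum_nonneg_eq_0_iff) (auto intro: Xt)
    then have t: "v k * dc l k * dlc l k = 0" by simp
    show "c l k = c' l k"
    proof (rule ccontr)
      assume ne: "c l k \<noteq> c' l k"
      then have "ln (c l k) \<noteq> ln (c' l k)" using cp cp' by simp
      then show False using t ne v_pos[rule_format, of k] unfolding dc_def dlc_def by simp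
    qed
  qed
  obtain K where K: "\<forall>u i j. \<bar>u i - u j\<bar> \<le> K * sqrt (Qw tt u)" using poinc_all by blast
  have const: "dp i = dp j" for i j using K[rule_format, of dp i j] Qz by simp
  have "Dd k0 * (dp k0)\<^sup>2 = 0"
    using Dz by (subst (asm) sum_nonneg_eq_0_iff) (use Dd_nn in auto)
  then have "dp k0 = 0" using Dd_k0 by simp
  then have "psi = psi'" using const unfolding dp_def by (intro ext) (metis eq_iff_diff_eq_0)
  then show ?thesis using ceq by simp
qed

end

definition Wc :: "('c::finite, 'e) fvmesh \<Rightarrow> ('s \<Rightarrow> real) \<Rightarrow> ('s \<Rightarrow> 'c \<Rightarrow> real) \<Rightarrow> 's \<Rightarrow> 'c \<Rightarrow> 'c \<Rightarrow> real" where
  "Wc Mh nu cn l i j = (if j \<in> nbrs Mh i then msig Mh i j * harm Mh (cn l) i j / (nu l * dsig Mh i j) else 0)"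
definition btc :: "('c::finite, 'e) fvmesh \<Rightarrow> ('s \<Rightarrow> real) \<Rightarrow> ('s \<Rightarrow> 'c \<Rightarrow> real) \<Rightarrow> ('c \<Rightarrow> real) \<Rightarrow> 's \<Rightarrow> 'c \<Rightarrow> 'c \<Rightarrow> real" where
  "btc Mh nu cn Tn l i j = msig Mh i j / (nu l * dsig Mh i j) * (cn l j * (Tn j - 1) - cn l i * (Tn i - 1))"
definition rc :: "('c::finite, 'e) fvmesh \<Rightarrow> real \<Rightarrow> ('s \<Rightarrow> real) \<Rightarrow> ('s \<Rightarrow> 'c \<Rightarrow> real) \<Rightarrow> ('c \<Rightarrow> real) \<Rightarrow> 's \<Rightarrow> 'c \<Rightarrow> real" where
  "rc Mh a nu cn Tn l i = vol Mh i * cn l i + a * (\<Sum>j\<in>nbrs Mh i. btc Mh nu cn Tn l i j)"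
definition ttc :: "('c::finite, 'e) fvmesh \<Rightarrow> 'c \<Rightarrow> 'c \<Rightarrow> real" where
  "ttc Mh i j = (if j \<in> nbrs Mh i then tau Mh i j else 0)"
definition Ddc :: "('c::finite, 'e) fvmesh \<Rightarrow> 'c \<Rightarrow> real" where
  "Ddc Mh i = (\<Sum>e\<in>{e\<in>EF Mh. own Mh e = i \<and> isD Mh e}. mext Mh e / dext Mh e)"
definition fc :: "('c::finite, 'e) fvmesh \<Rightarrow> real \<Rightarrow> ('c \<Rightarrow> real) \<Rightarrow> ('e \<Rightarrow> real) \<Rightarrow> ('e \<Rightarrow> real) \<Rightarrow> 'c \<Rightarrow> real" where
  "fc Mh eps rhof psiD g i = eps\<^sup>2 * (\<Sum>e\<in>{e\<in>EF Mh. own Mh e = i \<and> isD Mh e}. mext Mh e / dext Mh e * psiD e)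
     + (\<Sum>e\<in>{e\<in>EF Mh. own Mh e = i \<and> \<not> isD Mh e}. mext Mh e * g e) + vol Mh i * rhof i"

lemma sum_nbrs: "(\<Sum>j\<in>nbrs Mh i. F j) = (\<Sum>j\<in>UNIV. if j \<in> nbrs Mh i then F j else 0)"
  for Mh :: "('c::finite, 'e) fvmesh" and F :: "'c \<Rightarrow> real"
proof -
  have "nbrs Mh i = {j\<in>UNIV. j \<in> nbrs Mh i}" by simp
  then show ?thesis by (metis (no_types) finite sum.inter_filter)
qed

lemma nbrs_sym: "mesh_ok Mh \<Longrightarrow> (j \<in> nbrs Mh i) = (i \<in> nbrs Mh j)"
  unfolding nbrs_def mesh_ok_def by auto

lemma aux1: fixes dt V eps x y A B :: real assumes "dt > 0" "V > 0"
  shows "((x - y)/dt + eps/V*(A - B) = 0) \<longleftrightarrow> (V*x + dt*eps*A = V*y + dt*eps*B)"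
proof -
  have "(x - y)/dt + eps/V*(A-B) = (V*(x-y) + dt*eps*(A-B))/(dt*V)" using assms by (simp add: field_simps)
  moreover have "dt * V \<noteq> 0" using assms by simp
  ultimately have "((x - y)/dt + eps/V*(A - B) = 0) \<longleftrightarrow> (V*(x-y) + dt*eps*(A-B) = 0)" by simp
  also have "\<dots> \<longleftrightarrow> (V*x + dt*eps*A = V*y + dt*eps*B)" by (simp add: algebra_simps)
  finally show ?thesis .
qed

lemma aux2: fixes V al ST SDp Dk p SN Z rh :: real assumes "V > 0"
  shows "(- (al/V) * (ST + (SDp - Dk*p)) - 1/V * SN = Z + rh) \<longleftrightarrow> (al * (-ST) + al*Dk*p - (al*SDp + SN + V*rh) = V*Z)"
proof -
  have "- (al/V) * (ST + (SDp - Dk*p)) - 1/V * SN = (- al * (ST + (SDp - Dk*p)) - SN) / V"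
    using assms by (simp add: field_simps)
  then have "(- (al/V) * (ST + (SDp - Dk*p)) - 1/V * SN = Z + rh) \<longleftrightarrow> (- al * (ST + (SDp - Dk*p)) - SN = V * (Z + rh))"
    using assms by (simp add: divide_eq_eq mult.commute)
  also have "\<dots> \<longleftrightarrow> (al * (-ST) + al*Dk*p - (al*SDp + SN + V*rh) = V*Z)" by (simp add: algebra_simps)
  finally show ?thesis .
qed

lemma aux3: fixes dt CT T Tn ka S P U :: real assumes "dt > 0"
  shows "(CT * (T - Tn) / dt = ka * S + T * P + U) \<longleftrightarrow> ((CT/dt - P) * T - ka * S = CT/dt * Tn + U)"
proof -
  have e1: "CT * (T - Tn) / dt = CT/dt * T - CT/dt * Tn" using assms by (simp add: field_simps)
  have e2: "(CT/dt - P) * T = CT/dt * T - T * P" by (simp add: algebra_simps)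
  show ?thesis unfolding e1 e2 by (rule iffI; linarith)
qed

theorem theorem3p2:
  fixes Mh :: "('c::finite, 'e) fvmesh"
    and eps k CT dt :: real
    and nu z :: "'s::finite \<Rightarrow> real"
    and rhof :: "'c \<Rightarrow> real"
    and psiD g :: "'e \<Rightarrow> real"
    and lamf :: "('c \<Rightarrow> real) \<Rightarrow> 'c \<Rightarrow> 'c \<Rightarrow> real"
    and uhat :: "('s \<Rightarrow> 'c \<Rightarrow> real) \<Rightarrow> ('c \<Rightarrow> real) \<Rightarrow> ('c \<Rightarrow> real) \<Rightarrow> 's \<Rightarrow> 'c \<Rightarrow> real ^ 'd"
    and cn :: "'s \<Rightarrow> 'c \<Rightarrow> real"
    and Tn :: "'c \<Rightarrow> real"
  assumes mesh: "mesh_ok Mh"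
    and conn: "mesh_connected Mh"
    and dir: "has_dirichlet_face Mh"
    and eps_pos: "eps > 0" and k_pos: "k > 0" and CT_pos: "CT > 0"
    and nu_pos: "\<forall>l. nu l > 0"
    and lam_sym: "\<forall>u i j. lamf u i j = lamf u j i"
    and cn_pos: "\<forall>l. Min (range (cn l)) > 0"
    and dt_pos: "dt > 0"
  shows "(\<exists>!(c, psi). (\<forall>l i. c l i > 0) \<and>
            scheme_eq1 Mh eps dt nu z cn Tn c psi \<and> scheme_eq2 Mh eps z rhof psiD g c psi) \<and>
         (\<forall>c psi. (\<forall>l i. c l i > 0) \<and>
            scheme_eq1 Mh eps dt nu z cn Tn c psi \<and> scheme_eq2 Mh eps z rhof psiD g c psi \<and>
            (\<forall>i. Tn i > 0) \<and> dt * Cstar Mh eps dt nu z lamf cn Tn c psi < CT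
          \<longrightarrow> (\<exists>!T. scheme_eq3 Mh eps k CT dt nu z lamf uhat cn Tn c psi T) \<and>
              (\<forall>T. scheme_eq3 Mh eps k CT dt nu z lamf uhat cn Tn c psi T \<longrightarrow> (\<forall>i. T i > 0)))"
proof -
  note M = mesh[unfolded mesh_ok_def]
  have vol_pos: "\<forall>i. vol Mh i > 0" using M by (rule conjunct1)
  have M2: "\<forall>i j. msig Mh i j = msig Mh j i \<and> msig Mh i j \<ge> 0" using M[THEN conjunct2] by (rule conjunct1)
  have msym: "\<forall>i j. msig Mh i j = msig Mh j i" using M2 by blast
  have mnn: "\<forall>i j. msig Mh i j \<ge> 0" using M2 by blast
  have dsym: "\<forall>i j. dsig Mh i j = dsig Mh j i" using M[THEN conjunct2, THEN conjunct2] by (rule conjunct1)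
  have dpos: "\<forall>i j. i \<noteq> j \<and> msig Mh i j > 0 \<longrightarrow> dsig Mh i j > 0"
    using M[THEN conjunct2, THEN conjunct2, THEN conjunct2] by (rule conjunct1)
  have finEF: "finite (EF Mh)" using M[THEN conjunct2, THEN conjunct2, THEN conjunct2, THEN conjunct2] by (rule conjunct1)
  have extp: "\<forall>e\<in>EF Mh. mext Mh e > 0 \<and> dext Mh e > 0"
    using M[THEN conjunct2, THEN conjunct2, THEN conjunct2, THEN conjunct2] by (rule conjunct2)
  have nb: "j \<in> nbrs Mh i \<Longrightarrow> msig Mh i j > 0 \<and> dsig Mh i j > 0" for i j
    using dpos unfolding nbrs_def by auto
  have cnp: "cn l i > 0" for l i
  proof -
    have "Min (range (cn l)) \<le> cn l i" by (rule Min_le) auto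
    then show ?thesis using cn_pos by (meson less_le_trans)
  qed
  have harm_pos: "j \<in> nbrs Mh i \<Longrightarrow> harm Mh (cn l) i j > 0" for l i j
    unfolding harm_def using vol_pos cnp by (intro divide_pos_pos mult_pos_pos add_pos_pos) auto
  define a where "a = dt * eps"
  define W where "W = Wc Mh nu cn"
  define r where "r = rc Mh a nu cn Tn"
  define tt where "tt = ttc Mh"
  define al where "al = eps\<^sup>2"
  define Dd where "Dd = Ddc Mh"
  define f where "f = fc Mh eps rhof psiD g"
  obtain e0 where e0: "e0 \<in> EF Mh" "isD Mh e0" using dir unfolding has_dirichlet_face_def by blast
  define k0 where "k0 = own Mh e0"
  define R where "R = adj_rel Mh"
  have a_pos: "a > 0" unfolding a_def using dt_pos eps_pos by simp
  \<comment> \<open>antisymmetric sum vanishes\<close>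
  have bt_zero: "(\<Sum>i\<in>UNIV. \<Sum>j\<in>nbrs Mh i. btc Mh nu cn Tn l i j) = 0" for l
  proof -
    define B where "B = (\<Sum>i\<in>UNIV. \<Sum>j\<in>UNIV. if j \<in> nbrs Mh i then btc Mh nu cn Tn l i j else 0)"
    have B1: "(\<Sum>i\<in>UNIV. \<Sum>j\<in>nbrs Mh i. btc Mh nu cn Tn l i j) = B" unfolding B_def sum_nbrs ..
    have "B = (\<Sum>j\<in>UNIV. \<Sum>i\<in>UNIV. if j \<in> nbrs Mh i then btc Mh nu cn Tn l i j else 0)"
      unfolding B_def by (rule sum.swap)
    also have "\<dots> = (\<Sum>j\<in>UNIV. \<Sum>i\<in>UNIV. - (if i \<in> nbrs Mh j then btc Mh nu cn Tn l j i else 0))"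
      by (intro sum.cong refl) (auto simp: nbrs_sym[OF mesh] btc_def msym dsym algebra_simps)
    also have "\<dots> = - B" unfolding B_def by (simp add: sum_negf)
    finally show ?thesis using B1 by simp
  qed
  interpret P: fvprob "vol Mh" W r z a tt al Dd f k0 R
  proof (unfold_locales)
    show "\<forall>i. vol Mh i > 0" by (rule vol_pos)
    show "a > 0" by (rule a_pos)
    show "al > 0" unfolding al_def using eps_pos by simp
    show "\<forall>l. (\<Sum>i\<in>UNIV. r l i) > 0"
    proof
      fix l
      have "(\<Sum>i\<in>UNIV. r l i) = (\<Sum>i\<in>UNIV. vol Mh i * cn l i) + a * (\<Sum>i\<in>UNIV. \<Sum>j\<in>nbrs Mh i. btc Mh nu cn Tn l i j)"
        unfolding r_def rc_def by (simp add: sum.distrib sum_distrib_left)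
      also have "\<dots> = (\<Sum>i\<in>UNIV. vol Mh i * cn l i)" using bt_zero by simp
      also have "\<dots> > 0" using vol_pos cnp by (intro sum_pos) auto
      finally show "(\<Sum>i\<in>UNIV. r l i) > 0" .
    qed
    show "\<forall>l i j. W l i j \<ge> 0"
      unfolding W_def Wc_def using nb harm_pos nu_pos
      by (auto intro!: divide_nonneg_pos mult_nonneg_nonneg less_imp_le mult_pos_pos)
    show "\<forall>l i j. W l i j = W l j i"
      unfolding W_def Wc_def harm_def using msym dsym nbrs_sym[OF mesh] by (auto simp: ac_simps)
    show "\<forall>l i j. (i,j) \<in> R \<longrightarrow> W l i j > 0"
      unfolding W_def Wc_def R_def adj_rel_def using nb harm_pos nu_pos
      by (auto intro!: divide_pos_pos mult_pos_pos)
    show "\<forall>i j. tt i j \<ge> 0" unfolding tt_def ttc_def tau_def using nb by (auto intro!: divide_nonneg_pos less_imp_le)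
    show "\<forall>i j. tt i j = tt j i" unfolding tt_def ttc_def tau_def using msym dsym nbrs_sym[OF mesh] by auto
    show "\<forall>i j. (i,j) \<in> R \<longrightarrow> tt i j > 0" unfolding tt_def ttc_def tau_def R_def adj_rel_def using nb by auto
    show "\<forall>i j. (i,j) \<in> R\<^sup>*" using conn unfolding mesh_connected_def R_def .
    have ed: "e \<in> EF Mh \<Longrightarrow> mext Mh e / dext Mh e \<ge> 0" for e using extp by (simp add: zero_le_divide_iff less_imp_le)
    show "\<forall>i. Dd i \<ge> 0" unfolding Dd_def Ddc_def using ed by (intro allI sum_nonneg) simp
    show "Dd k0 > 0"
    proof -
      have fin: "finite {e\<in>EF Mh. own Mh e = k0 \<and> isD Mh e}" using finEF by simp
      have "mext Mh e0 / dext Mh e0 \<le> Dd k0" unfolding Dd_def Ddc_def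
        by (rule member_le_sum[OF _ _ fin]) (use e0 k0_def extp in \<open>auto intro!: divide_nonneg_pos less_imp_le\<close>)
      moreover have "mext Mh e0 / dext Mh e0 > 0" using extp e0 by simp
      ultimately show ?thesis by linarith
    qed
  qed
  have eq1_iff: "scheme_eq1 Mh eps dt nu z cn Tn c psi \<longleftrightarrow>
     (\<forall>l kk. vol Mh kk * c l kk + a * (\<Sum>j\<in>UNIV. W l kk j * ((ln (c l kk) + z l * psi kk) - (ln (c l j) + z l * psi j))) = r l kk)"
    for c psi
  proof -
    have "((c l kk - cn l kk) / dt + eps / vol Mh kk * (\<Sum>j\<in>nbrs Mh kk. msig Mh kk j * flux Mh nu z cn Tn c psi l kk j) = 0)
      \<longleftrightarrow> (vol Mh kk * c l kk + a * (\<Sum>j\<in>UNIV. W l kk j * ((ln (c l kk) + z l * psi kk) - (ln (c l j) + z l * psi j))) = r l kk)" for l kk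
    proof -
      define mu where "mu j = ln (c l j) + z l * psi j" for j
      define A where "A = (\<Sum>j\<in>UNIV. W l kk j * (mu kk - mu j))"
      define B where "B = (\<Sum>j\<in>nbrs Mh kk. btc Mh nu cn Tn l kk j)"
      have fl: "msig Mh kk j * flux Mh nu z cn Tn c psi l kk j
          = msig Mh kk j * harm Mh (cn l) kk j / (nu l * dsig Mh kk j) * (mu kk - mu j) - btc Mh nu cn Tn l kk j"
        if "j \<in> nbrs Mh kk" for j
      proof -
        have "nu l * dsig Mh kk j \<noteq> 0" using nb[OF that] nu_pos by (simp add: less_imp_neq[symmetric])
        then show ?thesis unfolding flux_def btc_def mu_def by (simp add: field_simps)
      qed
      have "(\<Sum>j\<in>nbrs Mh kk. msig Mh kk j * flux Mh nu z cn Tn c psi l kk j)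
          = (\<Sum>j\<in>nbrs Mh kk. msig Mh kk j * harm Mh (cn l) kk j / (nu l * dsig Mh kk j) * (mu kk - mu j)) - B"
        unfolding B_def sum_subtractf[symmetric] by (rule sum.cong) (auto simp: fl)
      also have "(\<Sum>j\<in>nbrs Mh kk. msig Mh kk j * harm Mh (cn l) kk j / (nu l * dsig Mh kk j) * (mu kk - mu j)) = A"
        unfolding A_def sum_nbrs W_def Wc_def by (intro sum.cong refl) simp
      finally have S: "(\<Sum>j\<in>nbrs Mh kk. msig Mh kk j * flux Mh nu z cn Tn c psi l kk j) = A - B" .
      have r: "r l kk = vol Mh kk * cn l kk + a * B" unfolding r_def rc_def B_def ..
      show ?thesis unfolding S r A_def[symmetric, unfolded mu_def] a_def
        using aux1[OF dt_pos vol_pos[rule_format, of kk]] by (simp add: mu_def A_def)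
    qed
    then show ?thesis unfolding scheme_eq1_def by simp
  qed
  have eq2_iff: "scheme_eq2 Mh eps z rhof psiD g c psi \<longleftrightarrow>
     (\<forall>kk. al * (\<Sum>j\<in>UNIV. tt kk j * (psi kk - psi j)) + al * Dd kk * psi kk - f kk = (\<Sum>l\<in>UNIV. vol Mh kk * z l * c l kk))"
    for c :: "'s \<Rightarrow> 'c \<Rightarrow> real" and psi
  proof -
    have "(- (eps\<^sup>2 / vol Mh kk) *
            ((\<Sum>j\<in>nbrs Mh kk. tau Mh kk j * (psi j - psi kk))
             + (\<Sum>e\<in>{e\<in>EF Mh. own Mh e = kk \<and> isD Mh e}. mext Mh e / dext Mh e * (psiD e - psi kk)))
          - 1 / vol Mh kk * (\<Sum>e\<in>{e\<in>EF Mh. own Mh e = kk \<and> \<not> isD Mh e}. mext Mh e * g e)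
        = (\<Sum>l\<in>UNIV. z l * c l kk) + rhof kk)
      \<longleftrightarrow> (al * (\<Sum>j\<in>UNIV. tt kk j * (psi kk - psi j)) + al * Dd kk * psi kk - f kk = (\<Sum>l\<in>UNIV. vol Mh kk * z l * c l kk))" for kk
    proof -
      define ST where "ST = (\<Sum>j\<in>nbrs Mh kk. tau Mh kk j * (psi j - psi kk))"
      define SDp where "SDp = (\<Sum>e\<in>{e\<in>EF Mh. own Mh e = kk \<and> isD Mh e}. mext Mh e / dext Mh e * psiD e)"
      define SN where "SN = (\<Sum>e\<in>{e\<in>EF Mh. own Mh e = kk \<and> \<not> isD Mh e}. mext Mh e * g e)"
      have D1: "(\<Sum>e\<in>{e\<in>EF Mh. own Mh e = kk \<and> isD Mh e}. mext Mh e / dext Mh e * (psiD e - psi kk)) = SDp - Dd kk * psi kk"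
        unfolding SDp_def Dd_def Ddc_def by (simp add: right_diff_distrib sum_subtractf sum_distrib_right)
      have T1: "- ST = (\<Sum>j\<in>UNIV. tt kk j * (psi kk - psi j))"
        unfolding ST_def sum_nbrs tt_def ttc_def sum_negf[symmetric] by (intro sum.cong refl) (simp add: algebra_simps)
      have F1: "f kk = al * SDp + SN + vol Mh kk * rhof kk" unfolding f_def fc_def al_def SDp_def SN_def ..
      have Z1: "vol Mh kk * (\<Sum>l\<in>UNIV. z l * c l kk) = (\<Sum>l\<in>UNIV. vol Mh kk * z l * c l kk)"
        by (simp add: sum_distrib_left mult.assoc)
      show ?thesis unfolding ST_def[symmetric] SN_def[symmetric] D1 al_def[symmetric]
        unfolding aux2[OF vol_pos[rule_format, of kk]] T1 F1 Z1 by simp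
    qed
    then show ?thesis unfolding scheme_eq2_def by simp
  qed
  obtain mu0 psi0 where min: "\<forall>mu' psi'. P.Gf mu0 psi0 \<le> P.Gf mu' psi'" using P.min_exists by blast
  define c0 where "c0 l i = exp (mu0 l i - z l * psi0 i)" for l i
  have c0p: "\<forall>l i. c0 l i > 0" unfolding c0_def by simp
  have lnc: "ln (c0 l i) + z l * psi0 i = mu0 l i" for l i unfolding c0_def by simp
  have ex1: "scheme_eq1 Mh eps dt nu z cn Tn c0 psi0"
    unfolding eq1_iff lnc
  proof (intro allI)
    fix l kk
    show "vol Mh kk * c0 l kk + a * (\<Sum>j\<in>UNIV. W l kk j * (mu0 l kk - mu0 l j)) = r l kk"
      using P.grad_mu[OF min, of kk l] unfolding c0_def by simp
  qed
  have ex2: "scheme_eq2 Mh eps z rhof psiD g c0 psi0"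
    unfolding eq2_iff
  proof (intro allI)
    fix kk
    show "al * (\<Sum>j\<in>UNIV. tt kk j * (psi0 kk - psi0 j)) + al * Dd kk * psi0 kk - f kk = (\<Sum>l\<in>UNIV. vol Mh kk * z l * c0 l kk)"
      using P.grad_psi[OF min, of kk] unfolding c0_def by simp
  qed
  have part1: "\<exists>!(c, psi). (\<forall>l i. c l i > 0) \<and>
            scheme_eq1 Mh eps dt nu z cn Tn c psi \<and> scheme_eq2 Mh eps z rhof psiD g c psi"
  proof (rule ex1I[of _ "(c0, psi0)"])
    show "case (c0, psi0) of (c, psi) \<Rightarrow> (\<forall>l i. c l i > 0) \<and>
            scheme_eq1 Mh eps dt nu z cn Tn c psi \<and> scheme_eq2 Mh eps z rhof psiD g c psi"
      using c0p ex1 ex2 by simp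
  next
    fix x assume "case x of (c, psi) \<Rightarrow> (\<forall>l i. c l i > 0) \<and>
            scheme_eq1 Mh eps dt nu z cn Tn c psi \<and> scheme_eq2 Mh eps z rhof psiD g c psi"
    then obtain c psi where x: "x = (c, psi)" and cp: "\<forall>l i. c l i > 0"
      and e1: "scheme_eq1 Mh eps dt nu z cn Tn c psi" and e2: "scheme_eq2 Mh eps z rhof psiD g c psi"
      by (cases x) auto
    have "c = c0 \<and> psi = psi0"
      by (rule P.uniq[OF cp c0p]) (use e1 e2 ex1 ex2 eq1_iff eq2_iff in auto)
    then show "x = (c0, psi0)" using x by simp
  qed
  have part2: "(\<exists>!T. scheme_eq3 Mh eps k CT dt nu z lamf uhat cn Tn c psi T) \<and>
              (\<forall>T. scheme_eq3 Mh eps k CT dt nu z lamf uhat cn Tn c psi T \<longrightarrow> (\<forall>i. T i > 0))"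
    if cp: "\<forall>l i. c l i > 0" and Tnp: "\<forall>i. Tn i > 0" and Cs: "dt * Cstar Mh eps dt nu z lamf cn Tn c psi < CT"
    for c psi
  proof -
    define Pi where "Pi i = Pterm Mh eps dt nu z lamf cn Tn c psi i" for i
    define \<gamma> where "\<gamma> i = CT/dt - Pi i" for i
    define \<kappa> where "\<kappa> i = k / vol Mh i" for i
    define b where "b i = CT/dt * Tn i + eps * (\<Sum>l\<in>UNIV. nu l * c l i * (norm (uhat c psi Tn l i))\<^sup>2)" for i
    have gp: "\<forall>i. \<gamma> i > 0"
    proof
      fix i
      have "\<bar>Pi i\<bar> \<le> Cstar Mh eps dt nu z lamf cn Tn c psi"
        unfolding Cstar_def Pi_def by (rule Max_ge) auto
      then have "dt * Pi i < CT" using Cs dt_pos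
        by (smt (verit, best) mult_le_cancel_left_pos abs_ge_self)
      then have "Pi i < CT/dt" using dt_pos by (simp add: field_simps)
      then show "\<gamma> i > 0" unfolding \<gamma>_def by simp
    qed
    have kp: "\<forall>i. \<kappa> i \<ge> 0" unfolding \<kappa>_def using k_pos vol_pos by (simp add: less_imp_le)
    have ttn: "\<forall>i j. tt i j \<ge> 0" by (rule P.tt_nn)
    have bp: "\<forall>i. b i > 0"
    proof
      fix i
      have "CT/dt * Tn i > 0" using CT_pos dt_pos Tnp by simp
      moreover have "eps * (\<Sum>l\<in>UNIV. nu l * c l i * (norm (uhat c psi Tn l i))\<^sup>2) \<ge> 0"
        using eps_pos nu_pos cp by (intro mult_nonneg_nonneg sum_nonneg) (auto simp: less_imp_le)
      ultimately show "b i > 0" unfolding b_def by simp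
    qed
    have eq3_iff: "scheme_eq3 Mh eps k CT dt nu z lamf uhat cn Tn c psi T \<longleftrightarrow>
      (\<forall>i. \<gamma> i * T i - \<kappa> i * (\<Sum>j\<in>UNIV. tt i j * (T j - T i)) = b i)" for T
    proof -
      have S: "(\<Sum>j\<in>nbrs Mh i. tau Mh i j * (T j - T i)) = (\<Sum>j\<in>UNIV. tt i j * (T j - T i))" for i
        unfolding sum_nbrs tt_def ttc_def by (intro sum.cong refl) simp
      show ?thesis unfolding scheme_eq3_def S aux3[OF dt_pos] \<gamma>_def \<kappa>_def b_def Pi_def ..
    qed
    show ?thesis
    proof
      show "\<exists>!T. scheme_eq3 Mh eps k CT dt nu z lamf uhat cn Tn c psi T"
        unfolding eq3_iff by (rule linsolve[OF gp kp ttn])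
      show "\<forall>T. scheme_eq3 Mh eps k CT dt nu z lamf uhat cn Tn c psi T \<longrightarrow> (\<forall>i. T i > 0)"
      proof (rule allI, rule impI)
        fix T assume "scheme_eq3 Mh eps k CT dt nu z lamf uhat cn Tn c psi T"
        then have "\<forall>i. \<gamma> i * T i - \<kappa> i * (\<Sum>j\<in>UNIV. tt i j * (T j - T i)) = b i" using eq3_iff by simp
        then show "\<forall>i. T i > 0" using minprin(2)[OF gp kp ttn] bp by (simp add: less_imp_le)
      qed
    qed
  qed
  show ?thesis
    apply (rule conjI[OF part1])
    apply (intro allI impI)
    apply (elim conjE)
    apply (rule part2)
      apply assumption+
    done
qed

end
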